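(* Let $\mathbb{F}\in\{\mathbb{R},\mathbb{C}\}$ and let $A\in\mathbb{F}^{n\times n}$ be normal, with eigenvalues $\lambda_1,\dots,\lambda_n$. Let $f,\varphi_1,\dots,\varphi_k$ be (scalar, complex-valued) functions defined at each eigenvalue of $A$. In the case $\mathbb{F}=\mathbb{R}$ assume in addition that for every eigenvalue $\lambda_j$ of $A$, \[ \overline{f(\lambda_j)}=f(\overline{\lambda_j})\quad\text{and}\quad \overline{\varphi_i(\lambda_j)}=\varphi_i(\overline{\lambda_j}),\quad i=1,\dots,k, \] so that $f(A),\varphi_1(A),\dots,\varphi_k(A)$ are real matrices. Let $\mathcal{P}_k(\mathbb{F})=\{\alpha_1\varphi_1+\dots+\alpha_k\varphi_k:\ \alpha_1,\dots,\alpha_k\in\mathbb{F}\}$. Then \[ \max_{v\in\mathbb{F}^n,\ \|v\|=1}\ \min_{p\in\mathcal{P}_k(\mathbb{F})}\|f(A)v-p(A)v\| \;=\; \min_{p\in\mathcal{P}_k(\mathbb{F})}\|f(A)-p(A)\|, \] where $\|\cdot\|$ denotes the Euclidean norm on vectors and the induced spectral norm on matrices.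
   Context: For a normal matrix $A=Q\Lambda Q^H$ with $Q$ unitary and $\Lambda=\mathrm{diag}(\lambda_1,\dots,\lambda_n)$, and a function $g$ defined on the eigenvalues, the matrix function is $g(A)=Q\,\mathrm{diag}(g(\lambda_1),\dots,g(\lambda_n))\,Q^H$. For $p=\sum_i\alpha_i\varphi_i$, $p(A)=\sum_i\alpha_i\varphi_i(A)$. *)

theory Defs
  imports "Jordan_Normal_Form.Matrix" "Jordan_Normal_Form.Char_Poly"
begin

definition ctrans :: "complex mat \<Rightarrow> complex mat" where
  "ctrans A = mat (dim_col A) (dim_row A) (\<lambda>(i,j). cnj (A $$ (j,i)))"

definition unitary_mat :: "nat \<Rightarrow> complex mat \<Rightarrow> bool" where
  "unitary_mat n Q \<longleftrightarrow> Q \<in> carrier_mat n n \<and> Q * ctrans Q = 1\<^sub>m n \<and> ctrans Q * Q = 1\<^sub>m n"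

definition normal_mat :: "nat \<Rightarrow> complex mat \<Rightarrow> bool" where
  "normal_mat n A \<longleftrightarrow> A \<in> carrier_mat n n \<and> A * ctrans A = ctrans A * A"

text \<open>Matrix function of a normal matrix: g(A) = Q diag(g(lambda_i)) Q^H for any unitary
  diagonalisation A = Q diag(lambda_i) Q^H (the result does not depend on the choice).\<close>
definition matfun :: "(complex \<Rightarrow> complex) \<Rightarrow> complex mat \<Rightarrow> complex mat" where
  "matfun g A = (SOME M. \<exists>Q lam. unitary_mat (dim_row A) Q \<and>
      A = Q * mat_diag (dim_row A) lam * ctrans Q \<and>
      M = Q * mat_diag (dim_row A) (\<lambda>i. g (lam i)) * ctrans Q)"

fun pmat :: "nat \<Rightarrow> (nat \<Rightarrow> complex) \<Rightarrow> (nat \<Rightarrow> complex \<Rightarrow> complex) \<Rightarrow> complex mat \<Rightarrow> complex mat" where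
  "pmat 0 alpha phi A = 0\<^sub>m (dim_row A) (dim_col A)"
| "pmat (Suc k) alpha phi A = pmat k alpha phi A + alpha k \<cdot>\<^sub>m matfun (phi k) A"

definition vnorm :: "complex vec \<Rightarrow> real" where
  "vnorm v = sqrt (\<Sum>i<dim_vec v. (cmod (v $ i))\<^sup>2)"

text \<open>Vectors of length n with entries in the scalar field K (K = \<real> or K = UNIV).\<close>
definition Kvecs :: "complex set \<Rightarrow> nat \<Rightarrow> complex vec set" where
  "Kvecs K n = {v. dim_vec v = n \<and> (\<forall>i<n. v $ i \<in> K)}"

definition snorm :: "complex set \<Rightarrow> nat \<Rightarrow> complex mat \<Rightarrow> real" where
  "snorm K n M = (SUP v \<in> {v \<in> Kvecs K n. vnorm v = 1}. vnorm (M *\<^sub>v v))"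

definition is_min :: "real set \<Rightarrow> real \<Rightarrow> bool" where
  "is_min S m \<longleftrightarrow> m \<in> S \<and> (\<forall>x\<in>S. m \<le> x)"

definition is_max :: "real set \<Rightarrow> real \<Rightarrow> bool" where
  "is_max S m \<longleftrightarrow> m \<in> S \<and> (\<forall>x\<in>S. x \<le> m)"

end

theory Submission imports Defs "Jordan_Normal_Form.Schur_Decomposition" "Jordan_Normal_Form.Spectral_Radius" "HOL-Analysis.Function_Topology" "HOL-Analysis.L2_Norm" "HOL-Analysis.Elementary_Metric_Spaces"
begin


definition Kf :: "complex set \<Rightarrow> bool" where "Kf K \<longleftrightarrow> K = \<real> \<or> K = UNIV"

lemma Kf_simps:
  assumes "Kf K"
  shows "0 \<in> K" "1 \<in> K" "-1 \<in> K" "complex_of_real r \<in> K"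
    "a \<in> K \<Longrightarrow> b \<in> K \<Longrightarrow> a + b \<in> K"
    "a \<in> K \<Longrightarrow> b \<in> K \<Longrightarrow> a - b \<in> K"
    "a \<in> K \<Longrightarrow> b \<in> K \<Longrightarrow> a * b \<in> K"
    "a \<in> K \<Longrightarrow> - a \<in> K"
    "a \<in> K \<Longrightarrow> inverse a \<in> K"
    "a \<in> K \<Longrightarrow> cnj a \<in> K"
  using assms unfolding Kf_def by (auto simp: Reals_cnj_iff)

lemma Kf_sum: "Kf K \<Longrightarrow> (\<And>i. i \<in> S \<Longrightarrow> g i \<in> K) \<Longrightarrow> sum g S \<in> K"
  by (induction S rule: infinite_finite_induct) (auto simp: Kf_simps)

locale snorm_K =
  fixes K :: "complex set" and N :: "(complex \<Rightarrow> complex) \<Rightarrow> real"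
  assumes K: "Kf K"
    and tri: "\<And>g h. N (\<lambda>x. g x + h x) \<le> N g + N h"
    and hom: "\<And>z g. z \<in> K \<Longrightarrow> N (\<lambda>x. z * g x) = cmod z * N g"
begin

lemma nonneg: "N g \<ge> 0"
proof -
  have "N (\<lambda>x. g x + (-1) * g x) \<le> N g + N (\<lambda>x. (-1) * g x)" by (rule tri)
  also have "N (\<lambda>x. (-1) * g x) = N g" using hom[of "-1" g] Kf_simps[OF K] by simp
  also have "(\<lambda>x. g x + (-1) * g x) = (\<lambda>x. 0 * g x)" by auto
  also have "N \<dots> = 0" using hom[of 0 g] Kf_simps[OF K] by simp
  finally show ?thesis by simp
qed

lemma lip:
  assumes "s \<in> K" "t \<in> K"
  shows "N (\<lambda>x. g x - t * h x) \<le> N (\<lambda>x. g x - s * h x) + cmod (t - s) * N h"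
proof -
  have "(\<lambda>x. g x - t * h x) = (\<lambda>x. (g x - s * h x) + (s - t) * h x)"
    by (auto simp: algebra_simps)
  hence "N (\<lambda>x. g x - t * h x) \<le> N (\<lambda>x. g x - s * h x) + N (\<lambda>x. (s - t) * h x)"
    using tri by metis
  also have "N (\<lambda>x. (s - t) * h x) = cmod (t - s) * N h"
    using hom[of "s - t" h] assms Kf_simps[OF K] by (simp add: norm_minus_commute)
  finally show ?thesis .
qed

lemma min1d: "\<exists>t0\<in>K. \<forall>t\<in>K. N (\<lambda>x. g x - t0 * h x) \<le> N (\<lambda>x. g x - t * h x)"
proof -
  define F where "F t = N (\<lambda>x. g x - t * h x)" for t
  have K0: "0 \<in> K" using Kf_simps[OF K] by simp
  have L: "F t \<le> F s + cmod (t - s) * N h" if "s \<in> K" "t \<in> K" for s t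
    using lip[OF that] unfolding F_def .
  show ?thesis
  proof (cases "N h = 0")
    case True
    show ?thesis
      apply (rule bexI[of _ 0])
      using L[OF _ K0] True K0 unfolding F_def by auto
  next
    case False
    hence Nh: "N h > 0" using nonneg[of h] by simp
    define R where "R = 2 * F 0 / N h + 1"
    have F0: "F 0 \<ge> 0" unfolding F_def using nonneg by simp
    have "2 * F 0 / N h \<ge> 0" using F0 Nh by simp
    hence R0: "R > 0" unfolding R_def by linarith
    define S where "S = (if K = \<real> then complex_of_real ` {-R..R}
       else (\<lambda>p. complex_of_real (fst p) + \<i> * complex_of_real (snd p)) ` ({-R..R} \<times> {-R..R}))"
    have cS: "compact S"
    proof (cases "K = \<real>")
      case True thus ?thesis unfolding S_def
        by (simp add: compact_continuous_image continuous_on_of_real_id)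
    next
      case False thus ?thesis unfolding S_def
        by (auto intro!: compact_continuous_image compact_Times continuous_intros)
    qed
    have SK: "S \<subseteq> K"
    proof (cases "K = \<real>")
      case True thus ?thesis unfolding S_def by auto
    next
      case False hence "K = UNIV" using K unfolding Kf_def by auto
      thus ?thesis by auto
    qed
    have S0: "0 \<in> S"
    proof (cases "K = \<real>")
      case True thus ?thesis using R0 unfolding S_def by (auto intro!: image_eqI[of _ _ 0])
    next
      case False
      have "(0::complex) = complex_of_real (fst (0::real,0::real)) + \<i> * complex_of_real (snd (0::real,0::real))" by simp
      moreover have "(0::real,0::real) \<in> {-R..R} \<times> {-R..R}" using R0 by auto
      ultimately show ?thesis using False unfolding S_def by (simp only: if_False) blast
    qed
    have inS: "t \<in> S" if "t \<in> K" "cmod t \<le> R" for t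
    proof (cases "K = \<real>")
      case True
      have "t \<in> \<real>" using that True by simp
      then obtain r where r: "t = complex_of_real r" by (rule Reals_cases)
      with that show ?thesis unfolding S_def using True by (auto simp: abs_le_iff)
    next
      case False
      have "\<bar>Re t\<bar> \<le> R" "\<bar>Im t\<bar> \<le> R" using that abs_Re_le_cmod abs_Im_le_cmod by (metis order.trans)+
      moreover have "t = complex_of_real (fst (Re t, Im t)) + \<i> * complex_of_real (snd (Re t, Im t))"
        by (simp add: complex_eq_iff)
      moreover have "(Re t, Im t) \<in> {-R..R} \<times> {-R..R}" using calculation by (auto simp: abs_le_iff)
      ultimately show ?thesis using False unfolding S_def by (simp only: if_False) blast
    qed
    have cont: "continuous_on S F"
      unfolding continuous_on_iff
    proof (intro ballI allI impI)
      fix x e assume x: "x \<in> S" and e: "(0::real) < e"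
      show "\<exists>d>0. \<forall>x'\<in>S. dist x' x < d \<longrightarrow> dist (F x') (F x) < e"
      proof (rule exI[of _ "e / N h"], intro conjI ballI impI)
        show "e / N h > 0" using e Nh by simp
        fix y assume y: "y \<in> S" and d: "dist y x < e / N h"
        have "F y \<le> F x + cmod (y - x) * N h" "F x \<le> F y + cmod (x - y) * N h"
          using L x y SK by auto
        moreover have "cmod (y - x) * N h < e" using d Nh by (simp add: dist_norm field_simps)
        moreover have "cmod (x - y) = cmod (y - x)" by (simp add: norm_minus_commute)
        ultimately show "dist (F y) (F x) < e" by (simp add: dist_real_def abs_less_iff)
      qed
    qed
    from continuous_attains_inf[OF cS _ cont] S0 obtain t0 where
      t0: "t0 \<in> S" "\<forall>y\<in>S. F t0 \<le> F y" by auto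
    show ?thesis
    proof (rule bexI[of _ t0], intro ballI)
      show "t0 \<in> K" using t0 SK by auto
      fix t assume t: "t \<in> K"
      show "N (\<lambda>x. g x - t0 * h x) \<le> N (\<lambda>x. g x - t * h x)"
      proof (cases "cmod t \<le> R")
        case True thus ?thesis using t0 inS[OF t] unfolding F_def by auto
      next
        case False
        have "(\<lambda>x. t * h x) = (\<lambda>x. g x + (-1) * (g x - t * h x))" by (auto simp: algebra_simps)
        hence "N (\<lambda>x. t * h x) \<le> N g + N (\<lambda>x. (-1) * (g x - t * h x))" using tri by metis
        also have "N (\<lambda>x. (-1) * (g x - t * h x)) = cmod (-1) * N (\<lambda>x. g x - t * h x)"
          by (rule hom) (simp add: Kf_simps[OF K])
        also have "\<dots> = F t" unfolding F_def by simp
        also have "N g = F 0" unfolding F_def by simp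
        finally have "cmod t * N h \<le> F 0 + F t" using hom[OF t, of h] by simp
        moreover have "R * N h < cmod t * N h" using False Nh by simp
        moreover have "R * N h = 2 * F 0 + N h" unfolding R_def using Nh by (simp add: field_simps)
        ultimately have "F 0 \<le> F t" using Nh by linarith
        moreover have "F t0 \<le> F 0" using t0 S0 by auto
        ultimately show ?thesis unfolding F_def by simp
      qed
    qed
  qed
qed

lemma min_exists:
  fixes m :: nat and phi :: "nat \<Rightarrow> complex \<Rightarrow> complex"
  shows "\<exists>a. (\<forall>i<m. a i \<in> K) \<and> (\<forall>b. (\<forall>i<m. b i \<in> K) \<longrightarrow>
      N (\<lambda>x. f x - (\<Sum>i<m. a i * phi i x)) \<le> N (\<lambda>x. f x - (\<Sum>i<m. b i * phi i x)))"
proof (induction m arbitrary: f)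
  case 0
  show ?case by auto
next
  case (Suc m)
  define A where "A g = (SOME a. (\<forall>i<m. a i \<in> K) \<and> (\<forall>b. (\<forall>i<m. b i \<in> K) \<longrightarrow>
      N (\<lambda>x. g x - (\<Sum>i<m. a i * phi i x)) \<le> N (\<lambda>x. g x - (\<Sum>i<m. b i * phi i x))))" for g
  have A: "(\<forall>i<m. A g i \<in> K) \<and> (\<forall>b. (\<forall>i<m. b i \<in> K) \<longrightarrow>
      N (\<lambda>x. g x - (\<Sum>i<m. A g i * phi i x)) \<le> N (\<lambda>x. g x - (\<Sum>i<m. b i * phi i x)))" for g
    unfolding A_def by (rule someI_ex[OF Suc.IH])
  define G where "G g = N (\<lambda>x. g x - (\<Sum>i<m. A g i * phi i x))" for g
  have Gle: "G g \<le> N (\<lambda>x. g x - (\<Sum>i<m. b i * phi i x))" if "\<forall>i<m. b i \<in> K" for g b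
    using A[of g] that unfolding G_def by auto
  interpret G: snorm_K K G
  proof
    show "Kf K" by (rule K)
    fix g h
    have "G (\<lambda>x. g x + h x) \<le> N (\<lambda>x. (g x + h x) - (\<Sum>i<m. (A g i + A h i) * phi i x))"
      by (rule Gle, insert A, auto simp: Kf_simps[OF K])
    also have "(\<lambda>x. (g x + h x) - (\<Sum>i<m. (A g i + A h i) * phi i x)) =
       (\<lambda>x. (g x - (\<Sum>i<m. A g i * phi i x)) + (h x - (\<Sum>i<m. A h i * phi i x)))"
      by (auto simp: algebra_simps sum.distrib)
    also have "N \<dots> \<le> G g + G h" unfolding G_def by (rule tri)
    finally show "G (\<lambda>x. g x + h x) \<le> G g + G h" .
  next
    fix z g assume z: "z \<in> K"
    show "G (\<lambda>x. z * g x) = cmod z * G g"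
    proof (cases "z = 0")
      case True
      have "G (\<lambda>x. z * g x) \<le> N (\<lambda>x. z * g x - (\<Sum>i<m. 0 * phi i x))"
        by (rule Gle, auto simp: Kf_simps[OF K])
      also have "\<dots> = 0" using True hom[of 0 "\<lambda>_. 0"] Kf_simps[OF K] by simp
      finally have "G (\<lambda>x. z * g x) \<le> 0" .
      moreover have "G (\<lambda>x. z * g x) \<ge> 0" unfolding G_def by (rule nonneg)
      ultimately show ?thesis using True by simp
    next
      case False
      have "G (\<lambda>x. z * g x) \<le> N (\<lambda>x. z * g x - (\<Sum>i<m. (z * A g i) * phi i x))"
        by (rule Gle, insert A z, auto simp: Kf_simps[OF K])
      also have "(\<lambda>x. z * g x - (\<Sum>i<m. (z * A g i) * phi i x)) =
          (\<lambda>x. z * (g x - (\<Sum>i<m. A g i * phi i x)))"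
        by (auto simp: algebra_simps sum_distrib_left)
      also have "N \<dots> = cmod z * G g" unfolding G_def by (rule hom[OF z])
      finally have 1: "G (\<lambda>x. z * g x) \<le> cmod z * G g" .
      let ?zi = "inverse z"
      have zi: "?zi \<in> K" using z Kf_simps[OF K] by auto
      have "G g \<le> N (\<lambda>x. g x - (\<Sum>i<m. (?zi * A (\<lambda>x. z * g x) i) * phi i x))"
        by (rule Gle, insert A zi, auto simp: Kf_simps[OF K])
      also have "(\<lambda>x. g x - (\<Sum>i<m. (?zi * A (\<lambda>x. z * g x) i) * phi i x)) =
          (\<lambda>x. ?zi * (z * g x - (\<Sum>i<m. A (\<lambda>x. z * g x) i * phi i x)))"
        using False by (auto simp: algebra_simps sum_distrib_left)
      also have "N \<dots> = cmod ?zi * G (\<lambda>x. z * g x)" unfolding G_def by (rule hom[OF zi])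
      finally have "G g \<le> G (\<lambda>x. z * g x) / cmod z"
        by (simp add: norm_inverse divide_inverse mult.commute)
      hence "cmod z * G g \<le> G (\<lambda>x. z * g x)" using False
        by (simp add: pos_le_divide_eq mult.commute)
      with 1 show ?thesis by simp
    qed
  qed
  obtain t0 where t0: "t0 \<in> K" "\<forall>t\<in>K. G (\<lambda>x. f x - t0 * phi m x) \<le> G (\<lambda>x. f x - t * phi m x)"
    using G.min1d by blast
  define a where "a i = (if i = m then t0 else A (\<lambda>x. f x - t0 * phi m x) i)" for i
  show ?case
  proof (rule exI[of _ a], intro conjI allI impI)
    fix i assume "i < Suc m" thus "a i \<in> K" using A t0 unfolding a_def by auto
  next
    fix b assume b: "\<forall>i<Suc m. b i \<in> K"
    have "N (\<lambda>x. f x - (\<Sum>i<Suc m. a i * phi i x)) = G (\<lambda>x. f x - t0 * phi m x)"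
      unfolding G_def a_def by (simp add: algebra_simps)
    also have "\<dots> \<le> G (\<lambda>x. f x - b m * phi m x)" using t0 b by auto
    also have "\<dots> \<le> N (\<lambda>x. (f x - b m * phi m x) - (\<Sum>i<m. b i * phi i x))"
      by (rule Gle, insert b, auto)
    also have "\<dots> = N (\<lambda>x. f x - (\<Sum>i<Suc m. b i * phi i x))"
      by (simp add: algebra_simps)
    finally show "N (\<lambda>x. f x - (\<Sum>i<Suc m. a i * phi i x)) \<le> N (\<lambda>x. f x - (\<Sum>i<Suc m. b i * phi i x))" .
  qed
qed

end


lemma coord_cont[continuous_intros]: "continuous_on S (\<lambda>x::'a \<Rightarrow> 'b::topological_space. x i)"
  by (rule continuous_on_subset[OF continuous_on_product_coordinates], simp)

lemma cmod_add_sq: "(cmod (w + complex_of_real t * d))^2 = (cmod w)^2 + 2*t*Re(d * cnj w) + t^2 * (cmod d)^2"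
  unfolding cmod_power2 by (simp add: power2_eq_square algebra_simps)

lemma small_t:
  fixes a b :: real
  assumes b: "b \<ge> 0" and h: "\<And>t. 0 < t \<Longrightarrow> t \<le> 1 \<Longrightarrow> 2 * a + t * b \<ge> 0"
  shows "a \<ge> 0"
proof (rule ccontr)
  assume "\<not> a \<ge> 0" hence a: "a < 0" by simp
  define t where "t = min 1 (- a / (b + 1))"
  have bp: "b + 1 > 0" using b by simp
  have q: "- a / (b + 1) > 0" using a bp by (intro divide_pos_pos) auto
  have t0: "0 < t" "t \<le> 1" using q unfolding t_def by auto
  have "t * b \<le> (- a / (b + 1)) * b" using b unfolding t_def by (intro mult_right_mono) auto
  also have "\<dots> = (- a) * (b / (b + 1))" by simp
  also have "b / (b + 1) \<le> 1" using bp by simp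
  hence "(- a) * (b / (b + 1)) \<le> (- a) * 1" using a by (intro mult_left_mono) auto
  finally have "t * b \<le> - a" by simp
  hence "2 * a + t * b < 0" using a by linarith
  with h[OF t0] show False by simp
qed

definition simplexB :: "complex set \<Rightarrow> complex \<Rightarrow> real set" where
  "simplexB J m = (if m \<in> J then {0..1} else {0})"

lemma mem_PiE_UNIV: "w \<in> PiE UNIV B \<longleftrightarrow> (\<forall>m. w m \<in> B m)"
  by (simp add: PiE_iff)

lemma compact_simplex:
  shows "compact (PiE UNIV (simplexB J) \<inter> {w. (\<Sum>m\<in>J. w m) = 1})"
proof -
  have "compactin (product_topology (\<lambda>i. euclidean) UNIV) (PiE UNIV (simplexB J))"
    by (subst compactin_PiE) (auto simp: simplexB_def)
  hence c: "compact (PiE UNIV (simplexB J))" by (simp add: euclidean_product_topology)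
  have cl: "closed {w :: complex \<Rightarrow> real. (\<Sum>m\<in>J. w m) = 1}"
    by (rule closed_Collect_eq) (auto intro!: continuous_intros)
  show ?thesis using c cl by auto
qed

lemma min_norm_point:
  fixes J :: "complex set" and x :: "complex \<Rightarrow> nat \<Rightarrow> complex" and k :: nat
  assumes J: "finite J" "J \<noteq> {}"
  shows "\<exists>w::complex\<Rightarrow>real. (\<forall>m. w m \<ge> 0) \<and> (\<forall>m. m \<notin> J \<longrightarrow> w m = 0) \<and> (\<Sum>m\<in>J. w m) = 1 \<and>
     (\<forall>nu\<in>J. (\<Sum>i<k. Re (x nu i * cnj (\<Sum>m\<in>J. complex_of_real (w m) * x m i))) \<ge>
                (\<Sum>i<k. (cmod (\<Sum>m\<in>J. complex_of_real (w m) * x m i))^2))"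
proof -
  define S where "S = PiE UNIV (simplexB J) \<inter> {w. (\<Sum>m\<in>J. w m) = 1}"
  define Phi where "Phi w = (\<Sum>i<k. (cmod (\<Sum>m\<in>J. complex_of_real (w m) * x m i))^2)" for w
  have cS: "compact S" unfolding S_def by (rule compact_simplex)
  obtain m0 where m0: "m0 \<in> J" using J by auto
  have "\<forall>m. (if m = m0 then 1 else 0) \<in> simplexB J m" using m0 by (auto simp: simplexB_def)
  moreover have "(\<Sum>m\<in>J. (if m = m0 then 1::real else 0)) = 1" using m0 J by simp
  ultimately have "(\<lambda>m. if m = m0 then 1::real else 0) \<in> S" unfolding S_def mem_PiE_UNIV by auto
  hence Sne: "S \<noteq> {}" by auto
  have cont: "continuous_on S Phi" unfolding Phi_def by (auto intro!: continuous_intros)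
  obtain w0 where w0: "w0 \<in> S" "\<forall>w\<in>S. Phi w0 \<le> Phi w"
    using continuous_attains_inf[OF cS Sne cont] by auto
  define z where "z i = (\<Sum>m\<in>J. complex_of_real (w0 m) * x m i)" for i
  have w0in: "\<forall>m. w0 m \<in> simplexB J m" "sum w0 J = 1" using w0(1) mem_PiE_UNIV unfolding S_def by auto
  have w0p: "\<forall>m. w0 m \<ge> 0" "\<forall>m. m \<notin> J \<longrightarrow> w0 m = 0" "(\<Sum>m\<in>J. w0 m) = 1"
    using w0in unfolding simplexB_def by (auto split: if_splits simp: all_conj_distrib)
  show ?thesis
  proof (rule exI[of _ w0], intro conjI ballI)
    show "\<forall>m. w0 m \<ge> 0" "\<forall>m. m \<notin> J \<longrightarrow> w0 m = 0" "(\<Sum>m\<in>J. w0 m) = 1" by fact+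
    fix nu assume nu: "nu \<in> J"
    define a where "a = (\<Sum>i<k. Re ((x nu i - z i) * cnj (z i)))"
    define b where "b = (\<Sum>i<k. (cmod (x nu i - z i))^2)"
    have "2 * a + t * b \<ge> 0" if t: "0 < t" "t \<le> 1" for t
    proof -
      define wt where "wt m = (1 - t) * w0 m + (if m = nu then t else 0)" for m
      have "wt \<in> S"
      proof -
        have "(\<Sum>m\<in>J. wt m) = (1 - t) * (\<Sum>m\<in>J. w0 m) + (\<Sum>m\<in>J. (if m = nu then t else 0))"
          unfolding wt_def by (simp add: sum.distrib sum_distrib_left)
        also have "\<dots> = 1" using w0p nu J by simp
        finally have s: "(\<Sum>m\<in>J. wt m) = 1" .
        have "wt m \<in> simplexB J m" for m
        proof (cases "m \<in> J")
          case True
          have "w0 m \<in> simplexB J m" using w0in by auto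
          hence "w0 m \<le> 1" "w0 m \<ge> 0" using True unfolding simplexB_def by auto
          moreover have "(1 - t) * w0 m \<le> (1 - t) * 1" using t \<open>w0 m \<le> 1\<close> by (intro mult_left_mono) auto
          ultimately show ?thesis using True t unfolding wt_def simplexB_def by auto
        next
          case False thus ?thesis using w0p nu unfolding wt_def simplexB_def by auto
        qed
        with s show ?thesis unfolding S_def using mem_PiE_UNIV by auto
      qed
      hence "Phi w0 \<le> Phi wt" using w0 by auto
      moreover have "Phi wt = (\<Sum>i<k. (cmod (z i + complex_of_real t * (x nu i - z i)))^2)"
      proof -
        have "(\<Sum>m\<in>J. complex_of_real (wt m) * x m i) = z i + complex_of_real t * (x nu i - z i)" for i
        proof -
          have pt: "complex_of_real (wt m) * x m i = complex_of_real (1 - t) * (complex_of_real (w0 m) * x m i)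
             + (if m = nu then complex_of_real t * x m i else 0)" for m
            unfolding wt_def by (simp add: algebra_simps)
          have "(\<Sum>m\<in>J. complex_of_real (wt m) * x m i) =
             complex_of_real (1 - t) * z i + (\<Sum>m\<in>J. (if m = nu then complex_of_real t * x m i else 0))"
            unfolding pt z_def by (simp add: sum.distrib sum_distrib_left)
          also have "(\<Sum>m\<in>J. (if m = nu then complex_of_real t * x m i else 0)) = complex_of_real t * x nu i"
            using nu J by simp
          finally show ?thesis by (simp add: algebra_simps)
        qed
        thus ?thesis unfolding Phi_def by simp
      qed
      moreover have "Phi w0 = (\<Sum>i<k. (cmod (z i))^2)" unfolding Phi_def z_def by simp
      moreover have "(\<Sum>i<k. (cmod (z i + complex_of_real t * (x nu i - z i)))^2)
         = (\<Sum>i<k. (cmod (z i))^2 + 2*t*Re((x nu i - z i) * cnj (z i)) + t^2 * (cmod (x nu i - z i))^2)"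
        by (simp only: cmod_add_sq)
      moreover have "\<dots> = (\<Sum>i<k. (cmod (z i))^2) + 2 * t * a + t^2 * b"
        unfolding a_def b_def by (simp only: sum.distrib sum_distrib_left mult.assoc)
      ultimately have "(\<Sum>i<k. (cmod (z i))^2) \<le> (\<Sum>i<k. (cmod (z i))^2) + 2 * t * a + t^2 * b"
        by linarith
      hence "0 \<le> t * (2 * a + t * b)" by (simp add: algebra_simps power2_eq_square)
      thus ?thesis using t by (simp add: zero_le_mult_iff)
    qed
    moreover have "b \<ge> 0" unfolding b_def by (auto intro: sum_nonneg)
    ultimately have "a \<ge> 0" using small_t by blast
    hence "(\<Sum>i<k. Re (x nu i * cnj (z i))) \<ge> (\<Sum>i<k. Re (z i * cnj (z i)))"
      unfolding a_def by (simp add: algebra_simps sum_subtractf)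
    moreover have "Re (z i * cnj (z i)) = (cmod (z i))^2" for i
      by (simp only: complex_mult_cnj Re_complex_of_real cmod_power2)
    ultimately show "(\<Sum>i<k. Re (x nu i * cnj (\<Sum>m\<in>J. complex_of_real (w0 m) * x m i))) \<ge>
                (\<Sum>i<k. (cmod (\<Sum>m\<in>J. complex_of_real (w0 m) * x m i))^2)" unfolding z_def by simp
  qed
qed


lemma mult_entry:
  assumes "A \<in> carrier_mat n m" "B \<in> carrier_mat m p" "i < n" "j < p"
  shows "(A * B) $$ (i,j) = (\<Sum>l<m. A $$ (i,l) * B $$ (l,j))"
  using assms by (simp add: scalar_prod_def lessThan_atLeast0)

lemma mv_entry:
  assumes "A \<in> carrier_mat n m" "v \<in> carrier_vec m" "i < n"
  shows "(A *\<^sub>v v) $ i = (\<Sum>l<m. A $$ (i,l) * v $ l)"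
  using assms by (simp add: scalar_prod_def lessThan_atLeast0)

lemma ctrans_carrier[simp]: "A \<in> carrier_mat n m \<Longrightarrow> ctrans A \<in> carrier_mat m n"
  unfolding ctrans_def by auto

lemma ctrans_dim[simp]: "dim_row (ctrans A) = dim_col A" "dim_col (ctrans A) = dim_row A"
  unfolding ctrans_def by auto

lemma ctrans_index[simp]: "i < dim_col A \<Longrightarrow> j < dim_row A \<Longrightarrow> ctrans A $$ (i,j) = cnj (A $$ (j,i))"
  unfolding ctrans_def by auto

lemma ctrans_ctrans[simp]: "ctrans (ctrans A) = A"
  by (rule eq_matI) auto

lemma ctrans_mult:
  assumes "A \<in> carrier_mat n m" "B \<in> carrier_mat m p"
  shows "ctrans (A * B) = ctrans B * ctrans A"
proof (rule eq_matI)
  fix i j assume ij: "i < dim_row (ctrans B * ctrans A)" "j < dim_col (ctrans B * ctrans A)"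
  hence i: "i < p" and j: "j < n" using assms by auto
  have "ctrans (A * B) $$ (i,j) = cnj ((A * B) $$ (j,i))" using i j assms by simp
  also have "\<dots> = (\<Sum>l<m. cnj (A $$ (j,l)) * cnj (B $$ (l,i)))"
    using mult_entry[OF assms j i] by simp
  also have "\<dots> = (ctrans B * ctrans A) $$ (i,j)"
    by (subst mult_entry[of _ p m _ n]) (insert assms i j, auto simp: mult.commute intro!: sum.cong)
  finally show "ctrans (A * B) $$ (i,j) = (ctrans B * ctrans A) $$ (i,j)" .
qed (insert assms, auto)

lemma unitary_carrier: "unitary_mat n Q \<Longrightarrow> Q \<in> carrier_mat n n"
  unfolding unitary_mat_def by auto

lemma unitary_cols:
  assumes "unitary_mat n Q" "j < n" "l < n"
  shows "(\<Sum>a<n. cnj (Q $$ (a,j)) * Q $$ (a,l)) = (if j = l then 1 else 0)"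
proof -
  have Q: "Q \<in> carrier_mat n n" and QQ: "ctrans Q * Q = 1\<^sub>m n" using assms unfolding unitary_mat_def by auto
  have "(ctrans Q * Q) $$ (j,l) = (\<Sum>a<n. cnj (Q $$ (a,j)) * Q $$ (a,l))"
    by (subst mult_entry[of _ n n _ n]) (insert Q assms, auto)
  thus ?thesis using QQ assms by simp
qed

lemma unitary_rows:
  assumes "unitary_mat n Q" "j < n" "l < n"
  shows "(\<Sum>a<n. Q $$ (j,a) * cnj (Q $$ (l,a))) = (if j = l then 1 else 0)"
proof -
  have Q: "Q \<in> carrier_mat n n" and QQ: "Q * ctrans Q = 1\<^sub>m n" using assms unfolding unitary_mat_def by auto
  have "(Q * ctrans Q) $$ (j,l) = (\<Sum>a<n. Q $$ (j,a) * cnj (Q $$ (l,a)))"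
    by (subst mult_entry[of _ n n _ n]) (insert Q assms, auto)
  thus ?thesis using QQ assms by simp
qed

lemma unitaryI:
  assumes Q: "Q \<in> carrier_mat n n"
    and o: "\<And>j l. j < n \<Longrightarrow> l < n \<Longrightarrow> (\<Sum>a<n. cnj (Q $$ (a,j)) * Q $$ (a,l)) = (if j = l then 1 else 0)"
  shows "unitary_mat n Q"
proof -
  have "ctrans Q * Q = 1\<^sub>m n"
  proof (rule eq_matI)
    fix j l assume "j < dim_row (1\<^sub>m n)" "l < dim_col (1\<^sub>m n)"
    hence jl: "j < n" "l < n" by auto
    show "(ctrans Q * Q) $$ (j,l) = 1\<^sub>m n $$ (j,l)"
      by (subst mult_entry[of _ n n _ n]) (insert Q jl o, auto)
  qed (insert Q, auto)
  moreover have "Q * ctrans Q = 1\<^sub>m n"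
    using mat_mult_left_right_inverse[OF ctrans_carrier[OF Q] Q] calculation by simp
  ultimately show ?thesis using Q unfolding unitary_mat_def by auto
qed

lemma unitary_ctrans: "unitary_mat n Q \<Longrightarrow> unitary_mat n (ctrans Q)"
  unfolding unitary_mat_def by auto

lemma unitary_mult:
  assumes P: "unitary_mat n P" and R: "unitary_mat n R"
  shows "unitary_mat n (P * R)"
proof -
  have Pc: "P \<in> carrier_mat n n" and Rc: "R \<in> carrier_mat n n" using P R unitary_carrier by auto
  have "ctrans (P * R) * (P * R) = (ctrans R * ctrans P) * (P * R)"
    by (simp add: ctrans_mult[OF Pc Rc])
  also have "\<dots> = ctrans R * (ctrans P * (P * R))"
    by (rule assoc_mult_mat[of _ n n _ n _ n]) (use Pc Rc in auto)
  also have "ctrans P * (P * R) = (ctrans P * P) * R"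
    by (rule assoc_mult_mat[of _ n n _ n _ n, symmetric]) (use Pc Rc in auto)
  also have "\<dots> = R" using P Rc unfolding unitary_mat_def by simp
  also have "ctrans R * R = 1\<^sub>m n" using R unfolding unitary_mat_def by simp
  finally have "ctrans (P * R) * (P * R) = 1\<^sub>m n" .
  moreover have "P * R \<in> carrier_mat n n" using Pc Rc by simp
  ultimately show ?thesis using mat_mult_left_right_inverse[of "ctrans (P*R)" n "P * R"] unfolding unitary_mat_def
    by auto
qed

definition SD :: "nat \<Rightarrow> complex mat \<Rightarrow> (nat \<Rightarrow> complex) \<Rightarrow> complex mat" where
  "SD n Q d = Q * mat_diag n d * ctrans Q"

lemma SD_carrier: "Q \<in> carrier_mat n n \<Longrightarrow> SD n Q d \<in> carrier_mat n n"
  unfolding SD_def by auto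

lemma SD_entry:
  assumes Q: "Q \<in> carrier_mat n n" and a: "a < n" and b: "b < n"
  shows "SD n Q d $$ (a,b) = (\<Sum>j<n. Q $$ (a,j) * d j * cnj (Q $$ (b,j)))"
proof -
  have "SD n Q d = Matrix.mat n n (\<lambda>(i,j). Q $$ (i,j) * d j) * ctrans Q"
    unfolding SD_def by (simp add: mat_diag_mult_right[OF Q])
  also have "\<dots> $$ (a,b) = (\<Sum>j<n. Q $$ (a,j) * d j * cnj (Q $$ (b,j)))"
    by (subst mult_entry[of _ n n _ n]) (insert Q a b, auto)
  finally show ?thesis .
qed


lemma cprod_sum: "v \<in> carrier_vec n \<Longrightarrow> w \<in> carrier_vec n \<Longrightarrow> v \<bullet>c w = (\<Sum>a<n. v $ a * cnj (w $ a))"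
  by (simp add: scalar_prod_def lessThan_atLeast0)

lemma cmod_sq_cnj: "complex_of_real ((cmod z)^2) = z * cnj z"
  by (simp add: complex_mult_cnj cmod_power2)

lemma cnj_sq: "z * cnj z = (complex_of_real (cmod z))^2"
  by (metis cmod_sq_cnj of_real_power)

lemma mult_sq[simp]: "A \<in> carrier_mat n n \<Longrightarrow> B \<in> carrier_mat n n \<Longrightarrow> A * B \<in> carrier_mat n n"
  by auto

lemma sq_entry:
  assumes "A \<in> carrier_mat n n" "B \<in> carrier_mat n n" "i < n" "j < n"
  shows "(A * B) $$ (i,j) = (\<Sum>l<n. A $$ (i,l) * B $$ (l,j))"
  by (rule mult_entry[OF assms])

lemma eig_unitary:
  fixes A :: "complex mat"
  assumes A: "A \<in> carrier_mat n n" and n: "n > 0" and ev: "eigenvector A v e"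
  shows "\<exists>W. unitary_mat n W \<and> (\<forall>a<n. (\<Sum>b<n. A $$ (a,b) * W $$ (b,0)) = e * W $$ (a,0))"
proof -
  from ev A have v: "v \<in> carrier_vec n" and v0: "v \<noteq> 0\<^sub>v n" and Av: "A *\<^sub>v v = e \<cdot>\<^sub>v v"
    unfolding eigenvector_def by auto
  interpret cof_vec_space n "TYPE(complex)" .
  define b where "b = basis_completion v"
  from basis_completion[OF v v0, folded b_def]
  have b: "set b \<subseteq> carrier_vec n" and dist_b: "distinct b" and indep: "\<not> lin_dep (set b)"
    and len_b: "length b = n" and hdb: "hd b = v" by auto
  from hdb len_b n obtain vs where bv: "b = v # vs" by (cases b, auto)
  define ws where "ws = gram_schmidt n b"
  from gram_schmidt_result[OF b dist_b indep refl, folded ws_def]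
  have ws: "set ws \<subseteq> carrier_vec n" "corthogonal ws" "length ws = n" by (auto simp: len_b)
  have hdws: "hd ws = v" unfolding ws_def bv using gram_schmidt_hd[OF v] by simp
  have ws0: "ws ! 0 = v" using hdws ws(3) n by (cases ws) auto
  have wsc: "ws ! j \<in> carrier_vec n" if "j < n" for j using ws that by auto
  have orth: "(\<Sum>a<n. ws ! l $ a * cnj (ws ! j $ a)) = 0 \<longleftrightarrow> l \<noteq> j" if "j < n" "l < n" for j l
    using corthogonalD[OF ws(2), of l j] that ws(3) cprod_sum[OF wsc wsc] by auto
  define nw where "nw j = sqrt (\<Sum>a<n. (cmod (ws ! j $ a))^2)" for j
  have nwsq: "complex_of_real ((nw j)^2) = (\<Sum>a<n. ws ! j $ a * cnj (ws ! j $ a))" for j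
    unfolding nw_def by (simp add: sum_nonneg cmod_sq_cnj[symmetric])
  have nwpos: "nw j > 0" if "j < n" for j
  proof -
    have "(\<Sum>a<n. ws ! j $ a * cnj (ws ! j $ a)) \<noteq> 0" using orth[OF that that] by simp
    hence "nw j \<noteq> 0" using nwsq[of j] by auto
    moreover have "(\<Sum>a<n. (cmod (ws ! j $ a))\<^sup>2) \<ge> 0" by (simp add: sum_nonneg)
    ultimately show ?thesis unfolding nw_def by simp
  qed
  define W where "W = Matrix.mat n n (\<lambda>(a,j). ws ! j $ a / complex_of_real (nw j))"
  have Wc: "W \<in> carrier_mat n n" unfolding W_def by auto
  have "unitary_mat n W"
  proof (rule unitaryI[OF Wc])
    fix j l assume j: "j < n" and l: "l < n"
    have "(\<Sum>a<n. cnj (W $$ (a,j)) * W $$ (a,l)) =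
       (\<Sum>a<n. ws ! l $ a * cnj (ws ! j $ a)) / (complex_of_real (nw j) * complex_of_real (nw l))"
      unfolding W_def using j l by (simp add: sum_divide_distrib mult.commute)
    also have "\<dots> = (if j = l then 1 else 0)"
    proof (cases "j = l")
      case True
      have "(\<Sum>a<n. ws ! l $ a * cnj (ws ! j $ a)) = complex_of_real ((nw j)^2)" using nwsq True by simp
      thus ?thesis using True nwpos[OF j] by (simp add: power2_eq_square)
    next
      case False thus ?thesis using orth[OF j l] by simp
    qed
    finally show "(\<Sum>a<n. cnj (W $$ (a,j)) * W $$ (a,l)) = (if j = l then 1 else 0)" .
  qed
  moreover have "(\<Sum>b<n. A $$ (a,b) * W $$ (b,0)) = e * W $$ (a,0)" if a: "a < n" for a
  proof -
    have "(\<Sum>b<n. A $$ (a,b) * W $$ (b,0)) = (\<Sum>b<n. A $$ (a,b) * v $ b) / complex_of_real (nw 0)"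
      unfolding W_def using n ws0 by (simp add: sum_divide_distrib)
    also have "(\<Sum>b<n. A $$ (a,b) * v $ b) = (A *\<^sub>v v) $ a" using mv_entry[OF A v a] by simp
    also have "\<dots> = e * v $ a" using Av a v by simp
    finally show ?thesis unfolding W_def using a n ws0 by simp
  qed
  ultimately show ?thesis by blast
qed


lemma unitary_WWX:
  assumes W: "unitary_mat n W" and X: "X \<in> carrier_mat n n"
  shows "W * (ctrans W * X) = X" "ctrans W * (W * X) = X"
proof -
  have Wc: "W \<in> carrier_mat n n" using W unitary_carrier by auto
  have "W * (ctrans W * X) = (W * ctrans W) * X"
    by (rule assoc_mult_mat[of _ n n _ n _ n, symmetric]) (use Wc X in auto)
  thus "W * (ctrans W * X) = X" using W X unfolding unitary_mat_def by simp
  have "ctrans W * (W * X) = (ctrans W * W) * X"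
    by (rule assoc_mult_mat[of _ n n _ n _ n, symmetric]) (use Wc X in auto)
  thus "ctrans W * (W * X) = X" using W X unfolding unitary_mat_def by simp
qed

lemma normal_conj:
  assumes N: "normal_mat n A" and W: "unitary_mat n W"
  shows "normal_mat n (ctrans W * A * W)"
proof -
  have A: "A \<in> carrier_mat n n" and AA: "A * ctrans A = ctrans A * A" using N unfolding normal_mat_def by auto
  have Wc: "W \<in> carrier_mat n n" using W unitary_carrier by auto
  note WWX = unitary_WWX[OF W]
  let ?B = "ctrans W * A * W"
  have cB: "ctrans ?B = ctrans W * ctrans A * W"
    using A Wc by (simp add: ctrans_mult[of _ n n _ n] assoc_mult_mat[of _ n n _ n _ n])
  have 1: "?B * ctrans ?B = ctrans W * (A * ctrans A) * W"
    unfolding cB using A Wc by (simp add: assoc_mult_mat[of _ n n _ n _ n] WWX)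
  have 2: "ctrans ?B * ?B = ctrans W * (ctrans A * A) * W"
    unfolding cB using A Wc by (simp add: assoc_mult_mat[of _ n n _ n _ n] WWX)
  have "?B \<in> carrier_mat n n" using A Wc by simp
  thus ?thesis unfolding normal_mat_def using 1 2 AA by simp
qed

definition ext0 :: "complex mat \<Rightarrow> nat \<Rightarrow> nat \<Rightarrow> complex" where
  "ext0 Q i j = (case i of 0 \<Rightarrow> (if j = 0 then 1 else 0) | Suc i' \<Rightarrow> (case j of 0 \<Rightarrow> 0 | Suc j' \<Rightarrow> Q $$ (i',j')))"

lemma ext0_simps[simp]: "ext0 Q 0 0 = 1" "ext0 Q 0 (Suc j) = 0" "ext0 Q (Suc i) 0 = 0"
  "ext0 Q (Suc i) (Suc j) = Q $$ (i,j)"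
  unfolding ext0_def by auto

lemma spectral:
  "normal_mat n A \<Longrightarrow> \<exists>Q lam. unitary_mat n Q \<and> A = SD n Q lam"
proof (induction n arbitrary: A)
  case 0
  have A: "A \<in> carrier_mat 0 0" using 0 unfolding normal_mat_def by auto
  have U: "unitary_mat 0 (1\<^sub>m 0)" by (rule unitaryI) auto
  have "A = SD 0 (1\<^sub>m 0) (\<lambda>_. 0)" by (rule eq_matI) (use A in \<open>auto simp: SD_def\<close>)
  with U show ?case by blast
next
  case (Suc m)
  define n where "n = Suc m"
  have sh: "(\<Sum>i<n. g i) = g 0 + (\<Sum>i<m. g (Suc i))" for g :: "nat \<Rightarrow> complex"
    unfolding n_def by (rule sum.lessThan_Suc_shift)
  have shr: "(\<Sum>i<n. g i) = g 0 + (\<Sum>i<m. g (Suc i))" for g :: "nat \<Rightarrow> real"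
    unfolding n_def by (rule sum.lessThan_Suc_shift)
  have N: "normal_mat n A" using Suc.prems n_def by simp
  have A: "A \<in> carrier_mat n n" using N unfolding normal_mat_def by auto
  from spectrum_non_empty[OF A] obtain e where "eigenvalue A e" unfolding spectrum_def n_def by auto
  then obtain v where ev: "eigenvector A v e" unfolding eigenvalue_def by auto
  from eig_unitary[OF A _ ev] obtain W where W: "unitary_mat n W"
    and Wev: "\<And>a. a < n \<Longrightarrow> (\<Sum>b<n. A $$ (a,b) * W $$ (b,0)) = e * W $$ (a,0)" unfolding n_def by auto
  have Wc: "W \<in> carrier_mat n n" using W unitary_carrier by auto
  define A' where "A' = ctrans W * A * W"
  have A'c: "A' \<in> carrier_mat n n" unfolding A'_def using A Wc by simp
  have N': "normal_mat n A'" unfolding A'_def by (rule normal_conj[OF N W])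
  have NN: "A' * ctrans A' = ctrans A' * A'" using N' unfolding normal_mat_def by auto
  have n0: "0 < n" unfolding n_def by simp
  have Sn: "i < m \<Longrightarrow> Suc i < n" for i unfolding n_def by simp
  have col0: "A' $$ (a,0) = (if a = 0 then e else 0)" if a: "a < n" for a
  proof -
    have "A' = ctrans W * (A * W)" unfolding A'_def using A Wc by (simp add: assoc_mult_mat[of _ n n _ n _ n])
    hence "A' $$ (a,0) = (\<Sum>b<n. ctrans W $$ (a,b) * (A * W) $$ (b,0))"
      using sq_entry[of "ctrans W" n "A * W" a 0] a Wc A n0 by simp
    also have "\<dots> = (\<Sum>b<n. cnj (W $$ (b,a)) * (e * W $$ (b,0)))"
    proof (rule sum.cong[OF refl])
      fix b assume b: "b \<in> {..<n}"
      have "(A * W) $$ (b,0) = (\<Sum>l<n. A $$ (b,l) * W $$ (l,0))"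
        using sq_entry[OF A Wc, of b 0] b n0 by simp
      thus "ctrans W $$ (a,b) * (A * W) $$ (b,0) = cnj (W $$ (b,a)) * (e * W $$ (b,0))"
        using Wev[of b] a b Wc by simp
    qed
    also have "\<dots> = e * (\<Sum>b<n. cnj (W $$ (b,a)) * W $$ (b,0))"
      by (simp add: sum_distrib_left algebra_simps)
    also have "\<dots> = (if a = 0 then e else 0)" using unitary_cols[OF W a n0] by simp
    finally show ?thesis .
  qed
  have row0: "A' $$ (0, Suc l) = 0" if l: "l < m" for l
  proof -
    have "(A' * ctrans A') $$ (0,0) = (\<Sum>j<n. A' $$ (0,j) * ctrans A' $$ (j,0))"
      by (rule sq_entry) (use A'c n0 in auto)
    also have "\<dots> = (\<Sum>j<n. complex_of_real ((cmod (A' $$ (0,j)))^2))"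
      by (rule sum.cong) (use A'c n0 in \<open>auto simp: cnj_sq\<close>)
    finally have L: "(A' * ctrans A') $$ (0,0) = complex_of_real (\<Sum>j<n. (cmod (A' $$ (0,j)))^2)"
      by simp
    have "(ctrans A' * A') $$ (0,0) = (\<Sum>j<n. ctrans A' $$ (0,j) * A' $$ (j,0))"
      by (rule sq_entry) (use A'c n0 in auto)
    also have "\<dots> = (\<Sum>j<n. if j = 0 then cnj e * e else 0)"
      by (rule sum.cong) (use A'c n0 in \<open>auto simp: col0\<close>)
    also have "\<dots> = complex_of_real ((cmod e)^2)" using n0 by (simp add: cnj_sq mult.commute)
    finally have R: "(ctrans A' * A') $$ (0,0) = complex_of_real ((cmod e)^2)" .
    have "(\<Sum>j<n. (cmod (A' $$ (0,j)))^2) = (cmod e)^2" using L R NN by (metis of_real_eq_iff)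
    hence "(cmod e)^2 + (\<Sum>j<m. (cmod (A' $$ (0,Suc j)))^2) = (cmod e)^2"
      unfolding shr using col0[OF n0] by simp
    hence "(\<Sum>j<m. (cmod (A' $$ (0,Suc j)))^2) = 0" by simp
    hence "\<forall>j\<in>{..<m}. (cmod (A' $$ (0,Suc j)))^2 = 0"
      by (subst sum_nonneg_eq_0_iff[symmetric]) auto
    thus ?thesis using l by auto
  qed
  define B where "B = Matrix.mat m m (\<lambda>(i,j). A' $$ (Suc i, Suc j))"
  have Bc: "B \<in> carrier_mat m m" unfolding B_def by auto
  have NB: "normal_mat m B"
  proof -
    have "B * ctrans B = ctrans B * B"
    proof (rule eq_matI)
      fix i j assume "i < dim_row (ctrans B * B)" "j < dim_col (ctrans B * B)"
      hence i: "i < m" and j: "j < m" using Bc by auto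
      have si: "Suc i < n" "Suc j < n" using i j unfolding n_def by auto
      have "(B * ctrans B) $$ (i,j) = (\<Sum>l<m. B $$ (i,l) * ctrans B $$ (l,j))"
        by (rule sq_entry) (use Bc i j in auto)
      also have "\<dots> = (\<Sum>l<m. A' $$ (Suc i, Suc l) * cnj (A' $$ (Suc j, Suc l)))"
        by (rule sum.cong) (use Bc i j in \<open>auto simp: B_def\<close>)
      also have "\<dots> = (\<Sum>l<n. A' $$ (Suc i, l) * ctrans A' $$ (l, Suc j))"
        unfolding sh using A'c si col0 Sn by simp
      also have "\<dots> = (A' * ctrans A') $$ (Suc i, Suc j)"
        by (rule sq_entry[symmetric]) (use A'c si in auto)
      also have "\<dots> = (ctrans A' * A') $$ (Suc i, Suc j)" using NN by simp
      also have "\<dots> = (\<Sum>l<n. ctrans A' $$ (Suc i, l) * A' $$ (l, Suc j))"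
        by (rule sq_entry) (use A'c si in auto)
      also have "\<dots> = (\<Sum>l<m. cnj (A' $$ (Suc l, Suc i)) * A' $$ (Suc l, Suc j))"
        unfolding sh using A'c si row0 i j Sn by simp
      also have "\<dots> = (\<Sum>l<m. ctrans B $$ (i,l) * B $$ (l,j))"
        by (rule sum.cong) (use Bc i j in \<open>auto simp: B_def\<close>)
      also have "\<dots> = (ctrans B * B) $$ (i,j)"
        by (rule sq_entry[symmetric]) (use Bc i j in auto)
      finally show "(B * ctrans B) $$ (i,j) = (ctrans B * B) $$ (i,j)" .
    qed (use Bc in auto)
    thus ?thesis unfolding normal_mat_def using Bc by auto
  qed
  from Suc.IH[OF NB] obtain Q3 lam3 where Q3: "unitary_mat m Q3" and B: "B = SD m Q3 lam3" by auto
  have Q3c: "Q3 \<in> carrier_mat m m" using Q3 unitary_carrier by auto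
  define Q' where "Q' = Matrix.mat n n (\<lambda>(i,j). ext0 Q3 i j)"
  define lam' where "lam' j = (case j of 0 \<Rightarrow> e | Suc j' \<Rightarrow> lam3 j')" for j
  have Q'c: "Q' \<in> carrier_mat n n" unfolding Q'_def by auto
  have UQ': "unitary_mat n Q'"
  proof (rule unitaryI[OF Q'c])
    fix j l assume j: "j < n" and l: "l < n"
    have "(\<Sum>a<n. cnj (Q' $$ (a,j)) * Q' $$ (a,l)) = (\<Sum>a<n. cnj (ext0 Q3 a j) * ext0 Q3 a l)"
      by (rule sum.cong) (use j l in \<open>auto simp: Q'_def\<close>)
    also have "\<dots> = cnj (ext0 Q3 0 j) * ext0 Q3 0 l + (\<Sum>a<m. cnj (ext0 Q3 (Suc a) j) * ext0 Q3 (Suc a) l)"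
      by (rule sh)
    also have "\<dots> = (if j = l then 1 else 0)"
    proof (cases j)
      case 0 thus ?thesis by (cases l) auto
    next
      case (Suc j')
      show ?thesis
      proof (cases l)
        case 0 thus ?thesis using Suc by auto
      next
        case (Suc l')
        have "j' < m" "l' < m" using j l Suc \<open>j = Suc j'\<close> unfolding n_def by auto
        thus ?thesis using \<open>j = Suc j'\<close> Suc unitary_cols[OF Q3, of j' l'] by auto
      qed
    qed
    finally show "(\<Sum>a<n. cnj (Q' $$ (a,j)) * Q' $$ (a,l)) = (if j = l then 1 else 0)" .
  qed
  have A'eq: "A' = SD n Q' lam'"
  proof (rule eq_matI)
    fix a b assume "a < dim_row (SD n Q' lam')" "b < dim_col (SD n Q' lam')"
    have SDc: "SD n Q' lam' \<in> carrier_mat n n" by (rule SD_carrier[OF Q'c])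
    hence a: "a < n" and b: "b < n" using \<open>a < dim_row (SD n Q' lam')\<close> \<open>b < dim_col (SD n Q' lam')\<close>
      by (metis carrier_matD(1), metis carrier_matD(2))
    have "SD n Q' lam' $$ (a,b) = (\<Sum>j<n. ext0 Q3 a j * lam' j * cnj (ext0 Q3 b j))"
      unfolding SD_entry[OF Q'c a b] by (rule sum.cong) (use a b in \<open>auto simp: Q'_def\<close>)
    also have "\<dots> = ext0 Q3 a 0 * e * cnj (ext0 Q3 b 0) +
       (\<Sum>j<m. ext0 Q3 a (Suc j) * lam3 j * cnj (ext0 Q3 b (Suc j)))"
      unfolding sh lam'_def by simp
    also have "\<dots> = A' $$ (a,b)"
    proof (cases a)
      case 0
      show ?thesis
      proof (cases b)
        case 0 thus ?thesis using \<open>a = 0\<close> col0 n0 by simp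
      next
        case (Suc b') thus ?thesis using \<open>a = 0\<close> row0 b unfolding n_def by simp
      qed
    next
      case (Suc a')
      show ?thesis
      proof (cases b)
        case 0 thus ?thesis using Suc col0 a by simp
      next
        case (Suc b')
        have ab: "a' < m" "b' < m" using a b \<open>a = Suc a'\<close> Suc unfolding n_def by auto
        have "B $$ (a',b') = (\<Sum>j<m. Q3 $$ (a',j) * lam3 j * cnj (Q3 $$ (b',j)))"
          unfolding B by (rule SD_entry[OF Q3c ab])
        thus ?thesis using \<open>a = Suc a'\<close> Suc ab unfolding B_def by simp
      qed
    qed
    finally show "A' $$ (a,b) = SD n Q' lam' $$ (a,b)" by simp
  qed (use A'c SD_carrier[OF Q'c, of lam'] in \<open>metis carrier_matD(1), metis carrier_matD(2)\<close>)
  have "A = W * A' * ctrans W"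
  proof -
    have "W * A' * ctrans W = W * (ctrans W * (A * (W * ctrans W)))"
      unfolding A'_def using A Wc by (simp add: assoc_mult_mat[of _ n n _ n _ n])
    also have "W * ctrans W = 1\<^sub>m n" using W unfolding unitary_mat_def by simp
    finally show ?thesis using unitary_WWX(1)[OF W A] A by simp
  qed
  also have "\<dots> = SD n (W * Q') lam'"
    unfolding A'eq SD_def using Wc Q'c
    by (simp add: ctrans_mult[of _ n n _ n] assoc_mult_mat[of _ n n _ n _ n])
  finally show ?case using unitary_mult[OF W UQ'] unfolding n_def by blast
qed


lemma mat_diag_dims[simp]: "dim_row (mat_diag n f) = n" "dim_col (mat_diag n f) = n"
  unfolding mat_diag_def by auto

lemma unitary_one: "unitary_mat n Q \<Longrightarrow> Q * ctrans Q = 1\<^sub>m n" "unitary_mat n Q \<Longrightarrow> ctrans Q * Q = 1\<^sub>m n"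
  unfolding unitary_mat_def by auto

lemma SD_indep:
  assumes Q: "unitary_mat n Q" and Q': "unitary_mat n Q'" and eq: "SD n Q lam = SD n Q' lam'"
  shows "SD n Q (\<lambda>i. g (lam i)) = SD n Q' (\<lambda>i. g (lam' i))"
proof -
  have Qc: "Q \<in> carrier_mat n n" and Q'c: "Q' \<in> carrier_mat n n" using Q Q' unitary_carrier by auto
  note WQ = unitary_WWX[OF Q] and WQ' = unitary_WWX[OF Q']
  define U where "U = ctrans Q * Q'"
  have Uc: "U \<in> carrier_mat n n" unfolding U_def using Qc Q'c by simp
  let ?D = "mat_diag n lam" and ?D' = "mat_diag n lam'"
  let ?Dg = "mat_diag n (\<lambda>i. g (lam i))" and ?Dg' = "mat_diag n (\<lambda>i. g (lam' i))"
  have "ctrans Q * SD n Q lam * Q' = ?D * U"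
    unfolding SD_def U_def using Qc Q'c by (simp add: assoc_mult_mat[of _ n n _ n _ n] WQ)
  moreover have "ctrans Q * SD n Q' lam' * Q' = U * ?D'"
    unfolding SD_def U_def using Qc Q'c by (simp add: assoc_mult_mat[of _ n n _ n _ n] WQ' unitary_one[OF Q'])
  ultimately have DU: "?D * U = U * ?D'" using eq by simp
  have DgU: "?Dg * U = U * ?Dg'"
  proof (rule eq_matI)
    fix i j assume "i < dim_row (U * ?Dg')" "j < dim_col (U * ?Dg')"
    hence i: "i < n" and j: "j < n" using Uc by auto
    have "(?D * U) $$ (i,j) = (U * ?D') $$ (i,j)" using DU by simp
    hence "lam i * U $$ (i,j) = U $$ (i,j) * lam' j"
      using Uc i j by (simp add: mat_diag_mult_left[OF Uc] mat_diag_mult_right[OF Uc])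
    hence "g (lam i) * U $$ (i,j) = U $$ (i,j) * g (lam' j)"
      by (cases "U $$ (i,j) = 0") auto
    thus "(?Dg * U) $$ (i,j) = (U * ?Dg') $$ (i,j)"
      using Uc i j by (simp add: mat_diag_mult_left[OF Uc] mat_diag_mult_right[OF Uc])
  qed (use Uc in auto)
  have e1: "ctrans Q * Q' * ctrans Q' = ctrans Q"
  proof -
    have "ctrans Q * Q' * ctrans Q' = ctrans Q * (Q' * ctrans Q')"
      by (rule assoc_mult_mat[of _ n n _ n _ n]) (use Qc Q'c in auto)
    also have "Q' * ctrans Q' = 1\<^sub>m n" using Q' unfolding unitary_mat_def by simp
    finally show ?thesis using Qc by simp
  qed
  have "SD n Q (\<lambda>i. g (lam i)) = Q * ?Dg * (ctrans Q * Q' * ctrans Q')"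
    unfolding SD_def e1 ..
  also have "\<dots> = Q * (?Dg * U) * ctrans Q'"
    unfolding U_def using Qc Q'c by (simp add: assoc_mult_mat[of _ n n _ n _ n])
  also have "\<dots> = Q * (U * ?Dg') * ctrans Q'" unfolding DgU ..
  also have "\<dots> = SD n Q' (\<lambda>i. g (lam' i))"
    unfolding SD_def U_def using Qc Q'c by (simp add: assoc_mult_mat[of _ n n _ n _ n] WQ)
  finally show ?thesis .
qed

lemma matfun_SD:
  assumes Q: "unitary_mat n Q" and A: "A = SD n Q lam"
  shows "matfun g A = SD n Q (\<lambda>i. g (lam i))"
proof -
  have dA: "dim_row A = n" using A SD_carrier[OF unitary_carrier[OF Q]] by (metis carrier_matD(1))
  let ?P = "\<lambda>M. \<exists>Q lam. unitary_mat (dim_row A) Q \<and>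
      A = Q * mat_diag (dim_row A) lam * ctrans Q \<and>
      M = Q * mat_diag (dim_row A) (\<lambda>i. g (lam i)) * ctrans Q"
  have "?P (SD n Q (\<lambda>i. g (lam i)))" unfolding dA
    by (rule exI[of _ Q], rule exI[of _ lam]) (use Q A in \<open>simp add: SD_def\<close>)
  hence "?P (matfun g A)" unfolding matfun_def by (rule someI)
  then obtain Q1 lam1 where Q1: "unitary_mat n Q1" "A = SD n Q1 lam1"
    "matfun g A = SD n Q1 (\<lambda>i. g (lam1 i))" unfolding SD_def dA by auto
  show ?thesis unfolding Q1(3) by (rule SD_indep[OF Q1(1) Q]) (use Q1 A in simp)
qed

lemma SD_dim: "Q \<in> carrier_mat n n \<Longrightarrow> dim_row (SD n Q d) = n"  "Q \<in> carrier_mat n n \<Longrightarrow> dim_col (SD n Q d) = n"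
  unfolding SD_def by auto

lemma SD_add:
  assumes "Q \<in> carrier_mat n n"
  shows "SD n Q d1 + SD n Q d2 = SD n Q (\<lambda>j. d1 j + d2 j)"
  by (rule eq_matI) (use assms in
     \<open>auto simp: SD_dim SD_entry sum.distrib algebra_simps\<close>)

lemma SD_minus:
  assumes "Q \<in> carrier_mat n n"
  shows "SD n Q d1 - SD n Q d2 = SD n Q (\<lambda>j. d1 j - d2 j)"
  by (rule eq_matI) (use assms in
     \<open>auto simp: SD_dim SD_entry sum_subtractf algebra_simps\<close>)

lemma SD_smult:
  assumes "Q \<in> carrier_mat n n"
  shows "c \<cdot>\<^sub>m SD n Q d = SD n Q (\<lambda>j. c * d j)"
  by (rule eq_matI) (use assms in
     \<open>auto simp: SD_dim SD_entry sum_distrib_left algebra_simps\<close>)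

lemma SD_zero:
  assumes "Q \<in> carrier_mat n n"
  shows "SD n Q (\<lambda>j. 0) = 0\<^sub>m n n"
  by (rule eq_matI) (use assms in
     \<open>auto simp: SD_dim SD_entry\<close>)

lemma pmat_SD:
  assumes Q: "unitary_mat n Q" and A: "A = SD n Q lam"
  shows "pmat k alpha phi A = SD n Q (\<lambda>j. \<Sum>i<k. alpha i * phi i (lam j))"
proof (induction k)
  case 0
  have Qc: "Q \<in> carrier_mat n n" using Q unitary_carrier by auto
  have "dim_row A = n" "dim_col A = n" using A SD_carrier[OF Qc] by (metis carrier_matD)+
  thus ?case using SD_zero[OF Qc] by simp
next
  case (Suc k)
  have Qc: "Q \<in> carrier_mat n n" using Q unitary_carrier by auto
  show ?case using Suc matfun_SD[OF Q A, of "phi k"]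
    by (simp add: SD_smult[OF Qc] SD_add[OF Qc] algebra_simps)
qed


lemma unitary_norm:
  fixes n :: nat and U :: "nat \<Rightarrow> nat \<Rightarrow> complex" and y :: "nat \<Rightarrow> complex"
  assumes U: "\<And>j l. j < n \<Longrightarrow> l < n \<Longrightarrow> (\<Sum>a<n. cnj (U a j) * U a l) = (if j = l then 1 else 0)"
  shows "(\<Sum>a<n. (cmod (\<Sum>j<n. U a j * y j))^2) = (\<Sum>j<n. (cmod (y j))^2)"
proof -
  have "complex_of_real (\<Sum>a<n. (cmod (\<Sum>j<n. U a j * y j))^2)
      = (\<Sum>a<n. (\<Sum>j<n. U a j * y j) * cnj (\<Sum>l<n. U a l * y l))"
    by (simp only: of_real_sum cmod_sq_cnj)
  also have "\<dots> = (\<Sum>a<n. \<Sum>l<n. \<Sum>j<n. y j * (cnj (y l) * (U a j * cnj (U a l))))"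
    by (simp add: sum_distrib_left sum_distrib_right cnj_sum algebra_simps)
  also have "\<dots> = (\<Sum>l<n. \<Sum>a<n. \<Sum>j<n. y j * (cnj (y l) * (U a j * cnj (U a l))))"
    by (rule sum.swap)
  also have "\<dots> = (\<Sum>l<n. \<Sum>j<n. \<Sum>a<n. y j * (cnj (y l) * (U a j * cnj (U a l))))"
    by (rule sum.cong[OF refl], rule sum.swap)
  also have "\<dots> = (\<Sum>l<n. \<Sum>j<n. (y j * cnj (y l)) * (\<Sum>a<n. U a j * cnj (U a l)))"
    by (simp add: sum_distrib_left algebra_simps)
  also have "\<dots> = (\<Sum>l<n. \<Sum>j<n. (if j = l then y j * cnj (y l) else 0))"
  proof (rule sum.cong[OF refl], rule sum.cong[OF refl])
    fix j l assume j: "j \<in> {..<n}" and l: "l \<in> {..<n}"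
    have "(\<Sum>a<n. U a j * cnj (U a l)) = cnj (\<Sum>a<n. cnj (U a j) * U a l)" by (simp add: cnj_sum mult.commute)
    also have "\<dots> = (if j = l then 1 else 0)" using U[of j l] j l by auto
    finally show "y j * cnj (y l) * (\<Sum>a<n. U a j * cnj (U a l)) = (if j = l then y j * cnj (y l) else 0)" by simp
  qed
  also have "\<dots> = (\<Sum>j<n. y j * cnj (y j))"
    by (rule sum.cong[OF refl]) (subst sum.delta, auto)
  also have "\<dots> = complex_of_real (\<Sum>j<n. (cmod (y j))^2)" by (simp only: of_real_sum cmod_sq_cnj)
  finally show ?thesis by (simp only: of_real_eq_iff)
qed

definition cq :: "nat \<Rightarrow> complex mat \<Rightarrow> complex vec \<Rightarrow> nat \<Rightarrow> complex" where
  "cq n Q v j = (\<Sum>b<n. cnj (Q $$ (b,j)) * v $ b)"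

lemma SD_mv:
  assumes Q: "Q \<in> carrier_mat n n" and v: "v \<in> carrier_vec n" and a: "a < n"
  shows "(SD n Q d *\<^sub>v v) $ a = (\<Sum>j<n. Q $$ (a,j) * (d j * cq n Q v j))"
proof -
  have "(SD n Q d *\<^sub>v v) $ a = (\<Sum>b<n. SD n Q d $$ (a,b) * v $ b)"
    by (rule mv_entry[OF SD_carrier[OF Q] v a])
  also have "\<dots> = (\<Sum>b<n. \<Sum>j<n. Q $$ (a,j) * d j * cnj (Q $$ (b,j)) * v $ b)"
    by (rule sum.cong) (use Q a in \<open>auto simp: SD_entry sum_distrib_right\<close>)
  also have "\<dots> = (\<Sum>j<n. \<Sum>b<n. Q $$ (a,j) * d j * cnj (Q $$ (b,j)) * v $ b)"
    by (rule sum.swap)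
  also have "\<dots> = (\<Sum>j<n. Q $$ (a,j) * (d j * cq n Q v j))"
    unfolding cq_def by (simp add: sum_distrib_left algebra_simps)
  finally show ?thesis .
qed

lemma vnorm_carrier: "v \<in> carrier_vec n \<Longrightarrow> vnorm v = sqrt (\<Sum>a<n. (cmod (v $ a))^2)"
  unfolding vnorm_def by auto

lemma vnorm_SD:
  assumes Q: "unitary_mat n Q" and v: "v \<in> carrier_vec n"
  shows "vnorm (SD n Q d *\<^sub>v v) = sqrt (\<Sum>j<n. (cmod (d j))^2 * (cmod (cq n Q v j))^2)"
proof -
  have Qc: "Q \<in> carrier_mat n n" using Q unitary_carrier by auto
  have c: "SD n Q d *\<^sub>v v \<in> carrier_vec n" using mult_mat_vec_carrier[OF SD_carrier[OF Qc] v] .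
  have "vnorm (SD n Q d *\<^sub>v v) = sqrt (\<Sum>a<n. (cmod (\<Sum>j<n. Q $$ (a,j) * (d j * cq n Q v j)))^2)"
    unfolding vnorm_carrier[OF c] by (simp add: SD_mv[OF Qc v])
  also have "(\<Sum>a<n. (cmod (\<Sum>j<n. Q $$ (a,j) * (d j * cq n Q v j)))^2) = (\<Sum>j<n. (cmod (d j * cq n Q v j))^2)"
    by (rule unitary_norm[of n "\<lambda>a j. Q $$ (a,j)"]) (rule unitary_cols[OF Q])
  finally show ?thesis by (simp add: norm_mult power_mult_distrib)
qed

lemma cq_norm:
  assumes Q: "unitary_mat n Q" and v: "v \<in> carrier_vec n"
  shows "(\<Sum>j<n. (cmod (cq n Q v j))^2) = (\<Sum>b<n. (cmod (v $ b))^2)"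
  unfolding cq_def
proof (rule unitary_norm[of n "\<lambda>j b. cnj (Q $$ (b,j))"])
  fix j l assume "j < n" "l < n"
  thus "(\<Sum>a<n. cnj (cnj (Q $$ (j, a))) * cnj (Q $$ (l, a))) = (if j = l then 1 else 0)"
    using unitary_rows[OF Q] by simp
qed


lemma cq_SD:
  assumes Q: "unitary_mat n Q" and v: "v \<in> carrier_vec n" and j: "j < n"
  shows "cq n Q (SD n Q d *\<^sub>v v) j = d j * cq n Q v j"
proof -
  have Qc: "Q \<in> carrier_mat n n" using Q unitary_carrier by auto
  have "cq n Q (SD n Q d *\<^sub>v v) j = (\<Sum>b<n. cnj (Q $$ (b,j)) * (\<Sum>l<n. Q $$ (b,l) * (d l * cq n Q v l)))"
    unfolding cq_def[of n Q "SD n Q d *\<^sub>v v"] by (rule sum.cong) (use SD_mv[OF Qc v] in auto)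
  also have "\<dots> = (\<Sum>b<n. \<Sum>l<n. (cnj (Q $$ (b,j)) * Q $$ (b,l)) * (d l * cq n Q v l))"
    by (simp add: sum_distrib_left algebra_simps)
  also have "\<dots> = (\<Sum>l<n. \<Sum>b<n. (cnj (Q $$ (b,j)) * Q $$ (b,l)) * (d l * cq n Q v l))"
    by (rule sum.swap)
  also have "\<dots> = (\<Sum>l<n. (\<Sum>b<n. cnj (Q $$ (b,j)) * Q $$ (b,l)) * (d l * cq n Q v l))"
    by (simp only: sum_distrib_right)
  also have "\<dots> = (\<Sum>l<n. if j = l then d l * cq n Q v l else 0)"
    by (rule sum.cong) (use unitary_cols[OF Q j] in auto)
  also have "\<dots> = d j * cq n Q v j" using j by simp
  finally show ?thesis .
qed

lemma cq_smult:
  assumes v: "v \<in> carrier_vec n"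
  shows "cq n Q (c \<cdot>\<^sub>v v) j = c * cq n Q v j"
  unfolding cq_def using v by (simp add: sum_distrib_left algebra_simps)

lemma eig_in_E:
  assumes Q: "unitary_mat n Q" and A: "A = SD n Q lam" and ev: "eigenvalue A mu"
  shows "\<exists>j<n. lam j = mu"
proof -
  have Qc: "Q \<in> carrier_mat n n" using Q unitary_carrier by auto
  have dA: "dim_row A = n" using A SD_dim(1)[OF Qc] by simp
  from ev obtain u where u: "u \<in> carrier_vec n" "u \<noteq> 0\<^sub>v n" "A *\<^sub>v u = mu \<cdot>\<^sub>v u"
    unfolding eigenvalue_def eigenvector_def dA by auto
  have "\<exists>b<n. u $ b \<noteq> 0"
  proof (rule ccontr)
    assume "\<not> ?thesis"
    hence "u = 0\<^sub>v n" using u(1) by (intro eq_vecI) auto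
    with u(2) show False by simp
  qed
  then obtain b where b: "b < n" "u $ b \<noteq> 0" by auto
  have "(\<Sum>b<n. (cmod (u $ b))^2) > 0"
    by (rule sum_pos2[of _ b]) (use b in auto)
  hence "(\<Sum>j<n. (cmod (cq n Q u j))^2) > 0" using cq_norm[OF Q u(1)] by simp
  then obtain j where j: "j < n" "cq n Q u j \<noteq> 0"
    by (metis (no_types, lifting) lessThan_iff norm_zero power_zero_numeral sum.neutral less_irrefl)
  have "lam j * cq n Q u j = cq n Q (A *\<^sub>v u) j" using cq_SD[OF Q u(1) j(1)] A by simp
  also have "\<dots> = mu * cq n Q u j" using u(3) cq_smult[OF u(1)] by simp
  finally show ?thesis using j by auto
qed

lemma E_eig:
  assumes Q: "unitary_mat n Q" and A: "A = SD n Q lam" and j0: "j0 < n"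
  shows "eigenvalue A (lam j0)"
proof -
  have Qc: "Q \<in> carrier_mat n n" using Q unitary_carrier by auto
  have dA: "dim_row A = n" using A SD_dim(1)[OF Qc] by simp
  define u where "u = Matrix.vec n (\<lambda>a. Q $$ (a,j0))"
  have uc: "u \<in> carrier_vec n" unfolding u_def by simp
  have cqu: "cq n Q u j = (if j = j0 then 1 else 0)" if "j < n" for j
    unfolding cq_def u_def using unitary_cols[OF Q that j0] by simp
  have Au: "A *\<^sub>v u = lam j0 \<cdot>\<^sub>v u"
  proof (rule eq_vecI)
    fix a assume "a < dim_vec (lam j0 \<cdot>\<^sub>v u)"
    hence a: "a < n" using uc by simp
    have "(A *\<^sub>v u) $ a = (\<Sum>j<n. Q $$ (a,j) * (lam j * cq n Q u j))"
      unfolding A by (rule SD_mv[OF Qc uc a])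
    also have "\<dots> = (\<Sum>j<n. if j = j0 then Q $$ (a,j) * lam j else 0)"
      by (rule sum.cong) (auto simp: cqu)
    also have "\<dots> = (lam j0 \<cdot>\<^sub>v u) $ a" using j0 a by (simp add: u_def)
    finally show "(A *\<^sub>v u) $ a = (lam j0 \<cdot>\<^sub>v u) $ a" .
  qed (use uc A SD_dim[OF Qc] in simp)
  have "u \<noteq> 0\<^sub>v n"
  proof
    assume "u = 0\<^sub>v n"
    hence "cq n Q u j0 = 0" unfolding cq_def by simp
    with cqu[OF j0] show False by simp
  qed
  thus ?thesis unfolding eigenvalue_def eigenvector_def dA using uc Au by auto
qed

lemma real_eig_cnj:
  assumes A: "A \<in> carrier_mat n n" and real: "\<forall>i<n. \<forall>j<n. A $$ (i,j) \<in> \<real>"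
    and ev: "eigenvalue A mu"
  shows "eigenvalue A (cnj mu)"
proof -
  from ev A obtain u where u: "u \<in> carrier_vec n" "u \<noteq> 0\<^sub>v n" "A *\<^sub>v u = mu \<cdot>\<^sub>v u"
    unfolding eigenvalue_def eigenvector_def by auto
  define u' where "u' = Matrix.vec n (\<lambda>a. cnj (u $ a))"
  have u'c: "u' \<in> carrier_vec n" unfolding u'_def by simp
  have "u' \<noteq> 0\<^sub>v n"
  proof
    assume "u' = 0\<^sub>v n"
    hence "u = 0\<^sub>v n" using u(1) unfolding u'_def
      by (intro eq_vecI) (auto simp: vec_eq_iff)
    with u(2) show False by simp
  qed
  moreover have "A *\<^sub>v u' = cnj mu \<cdot>\<^sub>v u'"
  proof (rule eq_vecI)
    fix a assume "a < dim_vec (cnj mu \<cdot>\<^sub>v u')"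
    hence a: "a < n" using u'c by simp
    have "(A *\<^sub>v u') $ a = (\<Sum>l<n. A $$ (a,l) * cnj (u $ l))"
      using mv_entry[OF A u'c a] unfolding u'_def by simp
    also have "\<dots> = cnj (\<Sum>l<n. A $$ (a,l) * u $ l)"
      by (simp add: cnj_sum) (rule sum.cong, use real a in \<open>auto simp: Reals_cnj_iff\<close>)
    also have "(\<Sum>l<n. A $$ (a,l) * u $ l) = (A *\<^sub>v u) $ a" using mv_entry[OF A u(1) a] by simp
    also have "\<dots> = mu * u $ a" using u a by simp
    finally show "(A *\<^sub>v u') $ a = (cnj mu \<cdot>\<^sub>v u') $ a" using a unfolding u'_def by simp
  qed (use u'c A in simp)
  ultimately show ?thesis unfolding eigenvalue_def eigenvector_def using u'c A by auto
qed

definition cmat :: "nat \<Rightarrow> complex mat \<Rightarrow> complex mat" where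
  "cmat n Q = Matrix.mat n n (\<lambda>(a,b). cnj (Q $$ (a,b)))"

lemma cmat_unitary:
  assumes Q: "unitary_mat n Q"
  shows "unitary_mat n (cmat n Q)"
proof (rule unitaryI)
  show "cmat n Q \<in> carrier_mat n n" unfolding cmat_def by simp
  fix j l assume j: "j < n" and l: "l < n"
  have "(\<Sum>a<n. cnj (cmat n Q $$ (a,j)) * cmat n Q $$ (a,l)) = cnj (\<Sum>a<n. cnj (Q $$ (a,j)) * Q $$ (a,l))"
    unfolding cmat_def using j l by (simp add: cnj_sum)
  also have "\<dots> = (if j = l then 1 else 0)" using unitary_cols[OF Q j l] by simp
  finally show "(\<Sum>a<n. cnj (cmat n Q $$ (a,j)) * cmat n Q $$ (a,l)) = (if j = l then 1 else 0)" .
qed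

lemma cmat_SD_entry:
  assumes Q: "Q \<in> carrier_mat n n" and a: "a < n" and b: "b < n"
  shows "SD n (cmat n Q) (\<lambda>j. cnj (d j)) $$ (a,b) = cnj (SD n Q d $$ (a,b))"
proof -
  have c: "cmat n Q \<in> carrier_mat n n" unfolding cmat_def by simp
  show ?thesis unfolding SD_entry[OF c a b] SD_entry[OF Q a b] using a b
    by (simp add: cmat_def cnj_sum)
qed

lemma real_conj_decomp:
  assumes Q: "unitary_mat n Q" and A: "A = SD n Q lam" and real: "\<forall>i<n. \<forall>j<n. A $$ (i,j) \<in> \<real>"
  shows "A = SD n (cmat n Q) (\<lambda>j. cnj (lam j))"
proof -
  have Qc: "Q \<in> carrier_mat n n" using Q unitary_carrier by auto
  have c: "cmat n Q \<in> carrier_mat n n" unfolding cmat_def by simp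
  show ?thesis
  proof (rule eq_matI)
    fix a b assume "a < dim_row (SD n (cmat n Q) (\<lambda>j. cnj (lam j)))" "b < dim_col (SD n (cmat n Q) (\<lambda>j. cnj (lam j)))"
    hence a: "a < n" and b: "b < n" using SD_dim[OF c] by auto
    have "SD n (cmat n Q) (\<lambda>j. cnj (lam j)) $$ (a,b) = cnj (A $$ (a,b))"
      using cmat_SD_entry[OF Qc a b] A by simp
    also have "\<dots> = A $$ (a,b)" using real a b by (simp add: Reals_cnj_iff)
    finally show "A $$ (a,b) = SD n (cmat n Q) (\<lambda>j. cnj (lam j)) $$ (a,b)" by simp
  qed (use A SD_dim[OF Qc] SD_dim[OF c] in auto)
qed


lemma group_lam:
  fixes F :: "nat \<Rightarrow> 'a::comm_monoid_add"
  shows "(\<Sum>j<n. F j) = (\<Sum>mu\<in>lam ` {..<n}. \<Sum>j<n. if lam j = mu then F j else 0)"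
proof -
  have "(\<Sum>j<n. F j) = (\<Sum>mu\<in>lam ` {..<n}. sum F {j \<in> {..<n}. lam j = mu})"
    by (rule sum.group[symmetric]) auto
  also have "\<dots> = (\<Sum>mu\<in>lam ` {..<n}. \<Sum>j<n. if lam j = mu then F j else 0)"
    by (rule sum.cong[OF refl], rule sum.inter_filter) simp
  finally show ?thesis .
qed

definition Pm :: "nat \<Rightarrow> complex mat \<Rightarrow> (nat \<Rightarrow> complex) \<Rightarrow> complex \<Rightarrow> nat \<Rightarrow> nat \<Rightarrow> complex" where
  "Pm n Q lam mu a b = (\<Sum>j<n. of_bool (lam j = mu) * (Q $$ (a,j) * cnj (Q $$ (b,j))))"

definition ss :: "nat \<Rightarrow> complex mat \<Rightarrow> (nat \<Rightarrow> complex) \<Rightarrow> complex \<Rightarrow> nat \<Rightarrow> real" where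
  "ss n Q lam mu i = (\<Sum>j<n. of_bool (lam j = mu) * (cmod (Q $$ (i,j)))^2)"

lemma Pm_diag: "Pm n Q lam mu i i = complex_of_real (ss n Q lam mu i)"
  unfolding Pm_def ss_def by (simp add: of_real_sum cnj_sq)

lemma ss_nonneg: "ss n Q lam mu i \<ge> 0"
  unfolding ss_def by (auto intro: sum_nonneg)

lemma Pm_SD: "Q \<in> carrier_mat n n \<Longrightarrow> a < n \<Longrightarrow> b < n \<Longrightarrow>
  Pm n Q lam mu a b = SD n Q (\<lambda>j. of_bool (lam j = mu)) $$ (a,b)"
  unfolding Pm_def by (simp add: SD_entry mult_ac)

lemma vstar_exists:
  fixes w :: "complex \<Rightarrow> real"
  assumes Q: "unitary_mat n Q"
    and wpos: "\<forall>mu. w mu \<ge> 0" and wsum: "(\<Sum>mu\<in>lam ` {..<n}. w mu) = 1"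
    and R: "R \<Longrightarrow> (\<forall>mu. w (cnj mu) = w mu) \<and> (\<forall>mu\<in>lam ` {..<n}. cnj mu \<in> lam ` {..<n}) \<and>
       (\<forall>mu a b. a < n \<longrightarrow> b < n \<longrightarrow> Pm n Q lam (cnj mu) a b = cnj (Pm n Q lam mu a b))"
  shows "\<exists>v. v \<in> carrier_vec n \<and>
    (\<forall>h. (\<Sum>j<n. (cmod (h (lam j)))^2 * (cmod (cq n Q v j))^2) = (\<Sum>mu\<in>lam ` {..<n}. w mu * (cmod (h mu))^2))
    \<and> (R \<longrightarrow> (\<forall>a<n. v $ a \<in> \<real>))"
proof -
  define E where "E = lam ` {..<n}"
  have Qc: "Q \<in> carrier_mat n n" using Q unitary_carrier by auto
  define ix where "ix mu = (LEAST i. i < n \<and> ss n Q lam mu i \<noteq> 0)" for mu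
  have ixE: "ix mu < n \<and> ss n Q lam mu (ix mu) > 0" if mu: "mu \<in> E" for mu
  proof -
    from mu obtain j0 where j0: "j0 < n" "lam j0 = mu" unfolding E_def by auto
    have "(\<Sum>i<n. (cmod (Q $$ (i,j0)))^2) = 1"
    proof -
      have "complex_of_real (\<Sum>i<n. (cmod (Q $$ (i,j0)))^2) = (\<Sum>i<n. cnj (Q $$ (i,j0)) * Q $$ (i,j0))"
        by (simp add: of_real_sum cnj_sq mult.commute)
      also have "\<dots> = 1" using unitary_cols[OF Q j0(1) j0(1)] by simp
      finally show ?thesis by (metis of_real_eq_1_iff)
    qed
    then obtain i where i: "i < n" "Q $$ (i,j0) \<noteq> 0"
      by (metis (no_types, lifting) lessThan_iff norm_zero power_zero_numeral sum.neutral zero_neq_one)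
    have "(\<lambda>j. of_bool (lam j = mu) * (cmod (Q $$ (i,j)))^2) j0 \<le> ss n Q lam mu i"
      unfolding ss_def by (rule member_le_sum) (use j0 in auto)
    hence "ss n Q lam mu i \<ge> (cmod (Q $$ (i,j0)))^2" using j0 by simp
    moreover have "(cmod (Q $$ (i,j0)))^2 > 0" using i by simp
    ultimately have "ss n Q lam mu i \<noteq> 0" by linarith
    hence ex: "\<exists>i. i < n \<and> ss n Q lam mu i \<noteq> 0" using i by auto
    have "ix mu < n \<and> ss n Q lam mu (ix mu) \<noteq> 0" unfolding ix_def by (rule LeastI_ex[OF ex])
    thus ?thesis using ss_nonneg[of n Q lam mu "ix mu"] by linarith
  qed
  define cf where "cf mu = sqrt (w mu / ss n Q lam mu (ix mu))" for mu
  define v where "v = Matrix.vec n (\<lambda>a. \<Sum>mu\<in>E. complex_of_real (cf mu) * Pm n Q lam mu a (ix mu))"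
  have vc: "v \<in> carrier_vec n" unfolding v_def by simp
  have cqv: "cq n Q v j = complex_of_real (cf (lam j)) * cnj (Q $$ (ix (lam j), j))" if j: "j < n" for j
  proof -
    have "cq n Q v j = (\<Sum>b<n. cnj (Q $$ (b,j)) * (\<Sum>mu\<in>E. complex_of_real (cf mu) *
         (\<Sum>l<n. of_bool (lam l = mu) * (Q $$ (b,l) * cnj (Q $$ (ix mu,l))))))"
      unfolding cq_def v_def Pm_def by simp
    also have "\<dots> = (\<Sum>b<n. \<Sum>mu\<in>E. \<Sum>l<n. (complex_of_real (cf mu) * of_bool (lam l = mu) * cnj (Q $$ (ix mu,l)))
         * (cnj (Q $$ (b,j)) * Q $$ (b,l)))"
      by (simp add: sum_distrib_left mult_ac)
    also have "\<dots> = (\<Sum>mu\<in>E. \<Sum>b<n. \<Sum>l<n. (complex_of_real (cf mu) * of_bool (lam l = mu) * cnj (Q $$ (ix mu,l)))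
         * (cnj (Q $$ (b,j)) * Q $$ (b,l)))"
      by (rule sum.swap)
    also have "\<dots> = (\<Sum>mu\<in>E. \<Sum>l<n. \<Sum>b<n. (complex_of_real (cf mu) * of_bool (lam l = mu) * cnj (Q $$ (ix mu,l)))
         * (cnj (Q $$ (b,j)) * Q $$ (b,l)))"
      by (rule sum.cong[OF refl], rule sum.swap)
    also have "\<dots> = (\<Sum>mu\<in>E. \<Sum>l<n. (complex_of_real (cf mu) * of_bool (lam l = mu) * cnj (Q $$ (ix mu,l)))
         * (\<Sum>b<n. cnj (Q $$ (b,j)) * Q $$ (b,l)))"
      by (simp only: sum_distrib_left)
    also have "\<dots> = (\<Sum>mu\<in>E. \<Sum>l<n. (complex_of_real (cf mu) * of_bool (lam l = mu) * cnj (Q $$ (ix mu,l)))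
         * (if j = l then 1 else 0))"
      by (rule sum.cong[OF refl], rule sum.cong[OF refl]) (use unitary_cols[OF Q j] in auto)
    also have "\<dots> = (\<Sum>mu\<in>E. complex_of_real (cf mu) * of_bool (lam j = mu) * cnj (Q $$ (ix mu,j)))"
      using j by (simp add: if_distrib cong: if_cong)
    also have "\<dots> = (\<Sum>mu\<in>E. if lam j = mu then complex_of_real (cf mu) * cnj (Q $$ (ix mu,j)) else 0)"
      by (rule sum.cong) auto
    also have "\<dots> = complex_of_real (cf (lam j)) * cnj (Q $$ (ix (lam j), j))"
      using j unfolding E_def by (simp add: sum.delta)
    finally show ?thesis .
  qed
  have main: "(\<Sum>j<n. (cmod (h (lam j)))^2 * (cmod (cq n Q v j))^2) = (\<Sum>mu\<in>E. w mu * (cmod (h mu))^2)" for h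
  proof -
    have "(\<Sum>j<n. (cmod (h (lam j)))^2 * (cmod (cq n Q v j))^2)
       = (\<Sum>j<n. (cmod (h (lam j)))^2 * ((cf (lam j))^2 * (cmod (Q $$ (ix (lam j), j)))^2))"
      by (rule sum.cong[OF refl]) (simp add: cqv norm_mult power_mult_distrib)
    also have "\<dots> = (\<Sum>mu\<in>E. \<Sum>j<n. if lam j = mu then
        (cmod (h (lam j)))^2 * ((cf (lam j))^2 * (cmod (Q $$ (ix (lam j), j)))^2) else 0)"
      unfolding E_def by (rule group_lam)
    also have "\<dots> = (\<Sum>mu\<in>E. (cmod (h mu))^2 * (cf mu)^2 * ss n Q lam mu (ix mu))"
    proof (rule sum.cong[OF refl])
      fix mu assume "mu \<in> E"
      have "(\<Sum>j<n. if lam j = mu then (cmod (h (lam j)))^2 * ((cf (lam j))^2 * (cmod (Q $$ (ix (lam j), j)))^2) else 0)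
        = (\<Sum>j<n. (cmod (h mu))^2 * (cf mu)^2 * (of_bool (lam j = mu) * (cmod (Q $$ (ix mu, j)))^2))"
        by (rule sum.cong[OF refl]) auto
      also have "\<dots> = (cmod (h mu))^2 * (cf mu)^2 * ss n Q lam mu (ix mu)"
        unfolding ss_def by (simp only: sum_distrib_left)
      finally show "(\<Sum>j<n. if lam j = mu then (cmod (h (lam j)))^2 * ((cf (lam j))^2 * (cmod (Q $$ (ix (lam j), j)))^2) else 0)
        = (cmod (h mu))^2 * (cf mu)^2 * ss n Q lam mu (ix mu)" .
    qed
    also have "\<dots> = (\<Sum>mu\<in>E. w mu * (cmod (h mu))^2)"
    proof (rule sum.cong[OF refl])
      fix mu assume mu: "mu \<in> E"
      have "(cf mu)^2 * ss n Q lam mu (ix mu) = w mu"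
        unfolding cf_def using ixE[OF mu] wpos by (simp add: real_sqrt_pow2)
      thus "(cmod (h mu))^2 * (cf mu)^2 * ss n Q lam mu (ix mu) = w mu * (cmod (h mu))^2"
        by (simp add: algebra_simps)
    qed
    finally show ?thesis .
  qed
  have real: "\<forall>a<n. v $ a \<in> \<real>" if Rh: R
  proof (intro allI impI)
    fix a assume a: "a < n"
    from R[OF Rh] have wc: "\<And>mu. w (cnj mu) = w mu" and Ec: "\<And>mu. mu \<in> E \<Longrightarrow> cnj mu \<in> E"
      and Pc: "\<And>mu a b. a < n \<Longrightarrow> b < n \<Longrightarrow> Pm n Q lam (cnj mu) a b = cnj (Pm n Q lam mu a b)"
      unfolding E_def by auto
    have ssc: "ss n Q lam (cnj mu) i = ss n Q lam mu i" if "i < n" for mu i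
      using Pc[OF that that, of mu] unfolding Pm_diag by simp
    have ixc: "ix (cnj mu) = ix mu" for mu
      unfolding ix_def using ssc by (metis (no_types, lifting))
    have cfc: "cf (cnj mu) = cf mu" if "mu \<in> E" for mu
      unfolding cf_def ixc wc using ssc ixE[OF that] by simp
    have inj: "inj_on cnj E" by (auto intro: inj_onI)
    have cE: "cnj ` E = E" using Ec by (force intro: image_eqI[of _ cnj "cnj _"])
    have "cnj (v $ a) = (\<Sum>mu\<in>E. complex_of_real (cf mu) * cnj (Pm n Q lam mu a (ix mu)))"
      unfolding v_def using a by (simp add: cnj_sum)
    also have "\<dots> = (\<Sum>mu\<in>E. complex_of_real (cf (cnj mu)) * Pm n Q lam (cnj mu) a (ix (cnj mu)))"
      by (rule sum.cong[OF refl]) (use a ixE in \<open>simp add: cfc ixc Pc\<close>)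
    also have "\<dots> = (\<Sum>mu\<in>cnj ` E. complex_of_real (cf mu) * Pm n Q lam mu a (ix mu))"
      by (rule sum.reindex[OF inj, symmetric, unfolded comp_def])
    also have "\<dots> = v $ a" unfolding cE v_def using a by simp
    finally show "v $ a \<in> \<real>" by (simp add: Reals_cnj_iff)
  qed
  show ?thesis using vc main real unfolding E_def by blast
qed


definition Nmax :: "complex set \<Rightarrow> (complex \<Rightarrow> complex) \<Rightarrow> real" where
  "Nmax E h = Max ((\<lambda>x. cmod (h x)) ` E)"

lemma Nmax_ge: "finite E \<Longrightarrow> x \<in> E \<Longrightarrow> cmod (h x) \<le> Nmax E h"
  unfolding Nmax_def by (rule Max_ge) auto

lemma Nmax_attained: "finite E \<Longrightarrow> E \<noteq> {} \<Longrightarrow> \<exists>x\<in>E. cmod (h x) = Nmax E h"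
  unfolding Nmax_def using Max_in[of "(\<lambda>x. cmod (h x)) ` E"] by fastforce

lemma Nmax_le: "finite E \<Longrightarrow> E \<noteq> {} \<Longrightarrow> (\<And>x. x \<in> E \<Longrightarrow> cmod (h x) \<le> b) \<Longrightarrow> Nmax E h \<le> b"
  using Nmax_attained by metis

lemma Nmax_less: "finite E \<Longrightarrow> E \<noteq> {} \<Longrightarrow> (\<And>x. x \<in> E \<Longrightarrow> cmod (h x) < b) \<Longrightarrow> Nmax E h < b"
  using Nmax_attained by metis

lemma Nmax_snorm:
  assumes E: "finite E" "E \<noteq> {}" and K: "Kf K"
  shows "snorm_K K (Nmax E)"
proof
  show "Kf K" by fact
  fix g h :: "complex \<Rightarrow> complex"
  show "Nmax E (\<lambda>x. g x + h x) \<le> Nmax E g + Nmax E h"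
  proof (rule Nmax_le[OF E])
    fix x assume x: "x \<in> E"
    have "cmod (g x + h x) \<le> cmod (g x) + cmod (h x)" by (rule norm_triangle_ineq)
    also have "\<dots> \<le> Nmax E g + Nmax E h" using Nmax_ge[OF E(1) x] by (simp add: add_mono)
    finally show "cmod (g x + h x) \<le> Nmax E g + Nmax E h" .
  qed
next
  fix z g assume "z \<in> K"
  show "Nmax E (\<lambda>x. z * g x) = cmod z * Nmax E g"
  proof (rule antisym)
    show "Nmax E (\<lambda>x. z * g x) \<le> cmod z * Nmax E g"
      by (rule Nmax_le[OF E]) (use Nmax_ge[OF E(1)] in \<open>auto simp: norm_mult intro: mult_left_mono\<close>)
    obtain x where x: "x \<in> E" "cmod (g x) = Nmax E g" using Nmax_attained[OF E] by blast
    have "cmod z * Nmax E g = cmod (z * g x)" using x by (simp add: norm_mult)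
    also have "\<dots> \<le> Nmax E (\<lambda>x. z * g x)" by (rule Nmax_ge[OF E(1) x(1)])
    finally show "cmod z * Nmax E g \<le> Nmax E (\<lambda>x. z * g x)" .
  qed
qed

lemma cmod_diff_sq_ge: "(cmod (w - d))^2 \<ge> (cmod w)^2 - 2 * Re (cnj w * d)"
proof -
  have "(cmod (w - d))^2 = (cmod w)^2 - 2 * Re (cnj w * d) + (cmod d)^2"
    unfolding cmod_power2 by (simp add: power2_eq_square algebra_simps)
  thus ?thesis by simp
qed

definition pK :: "complex set \<Rightarrow> complex \<Rightarrow> complex" where
  "pK K z = (if K = \<real> then complex_of_real (Re z) else z)"

lemma pK_in: "Kf K \<Longrightarrow> pK K z \<in> K"
  unfolding pK_def Kf_def by auto

lemma pK_Re:
  assumes K: "Kf K" and b: "b \<in> K"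
  shows "Re (b * (cnj r * p)) = Re (pK K (r * cnj p) * cnj b)"
proof (cases "K = \<real>")
  case True
  then obtain t where t: "b = complex_of_real t" using b by (auto elim: Reals_cases)
  show ?thesis unfolding pK_def t using True by simp
next
  case False
  have "Re (b * (cnj r * p)) = Re (cnj (b * (cnj r * p)))" by (simp only: cnj.sel(1))
  also have "cnj (b * (cnj r * p)) = r * cnj p * cnj b" by simp
  finally show ?thesis unfolding pK_def using False by (simp add: algebra_simps)
qed


lemma Re_ofr: "Re (complex_of_real w * y) = w * Re y" by simp

lemma weights_base:
  fixes K E :: "complex set" and f :: "complex \<Rightarrow> complex" and phi :: "nat \<Rightarrow> complex \<Rightarrow> complex"
    and astar :: "nat \<Rightarrow> complex" and k :: nat
  assumes r_def: "r = (\<lambda>a x. f x - (\<Sum>i<k. a i * phi i x))"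
    and K: "Kf K" and E: "finite E" "E \<noteq> {}"
    and aK: "\<forall>i<k. astar i \<in> K"
    and opt: "\<And>b. \<forall>i<k. b i \<in> K \<Longrightarrow> Nmax E (r astar) \<le> Nmax E (r b)"
  shows "\<exists>w. (\<forall>mu. w mu \<ge> 0) \<and> (\<Sum>mu\<in>E. w mu) = 1 \<and>
     (\<forall>a. (\<forall>i<k. a i \<in> K) \<longrightarrow> (\<Sum>mu\<in>E. w mu * (cmod (r a mu))^2) \<ge> (Nmax E (r astar))^2)"
proof -
  define c where "c = Nmax E (r astar)"
  define rs where "rs = r astar"
  define J where "J = {mu \<in> E. cmod (rs mu) = c}"
  have J: "finite J" "J \<noteq> {}" "J \<subseteq> E"
    using E Nmax_attained[OF E, of rs] unfolding J_def c_def rs_def by auto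
  have rsc: "cmod (rs mu) \<le> c" if "mu \<in> E" for mu
    unfolding c_def rs_def by (rule Nmax_ge[OF E(1) that])
  define x where "x mu i = pK K (rs mu * cnj (phi i mu))" for mu i
  from min_norm_point[OF J(1) J(2), of x k] obtain w0 :: "complex \<Rightarrow> real" where
    w0: "\<forall>m. w0 m \<ge> 0" "\<forall>m. m \<notin> J \<longrightarrow> w0 m = 0" "(\<Sum>m\<in>J. w0 m) = 1"
      "\<forall>nu\<in>J. (\<Sum>i<k. Re (x nu i * cnj (\<Sum>m\<in>J. complex_of_real (w0 m) * x m i))) \<ge>
                (\<Sum>i<k. (cmod (\<Sum>m\<in>J. complex_of_real (w0 m) * x m i))^2)"
    by blast
  define z where "z i = (\<Sum>m\<in>J. complex_of_real (w0 m) * x m i)" for i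
  have zK: "z i \<in> K" for i
    unfolding z_def x_def by (rule Kf_sum[OF K]) (use Kf_simps[OF K] pK_in[OF K] in auto)
  have ell: "Re (cnj (rs mu) * (\<Sum>i<k. b i * phi i mu)) = (\<Sum>i<k. Re (x mu i * cnj (b i)))"
    if b: "\<forall>i<k. b i \<in> K" for b mu
  proof -
    have "Re (cnj (rs mu) * (\<Sum>i<k. b i * phi i mu)) = (\<Sum>i<k. Re (b i * (cnj (rs mu) * phi i mu)))"
      by (simp add: sum_distrib_left Re_sum mult_ac)
    also have "\<dots> = (\<Sum>i<k. Re (x mu i * cnj (b i)))"
      unfolding x_def by (rule sum.cong[OF refl], rule pK_Re[OF K]) (use b in auto)
    finally show ?thesis .
  qed
  have z0: "(\<Sum>i<k. (cmod (z i))^2) = 0"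
  proof (rule ccontr)
    assume "(\<Sum>i<k. (cmod (z i))^2) \<noteq> 0"
    moreover have "(\<Sum>i<k. (cmod (z i))^2) \<ge> 0" by (auto intro: sum_nonneg)
    ultimately have S: "(\<Sum>i<k. (cmod (z i))^2) > 0" by linarith
    define d where "d mu = (\<Sum>i<k. z i * phi i mu)" for mu
    define l where "l mu = Re (cnj (rs mu) * d mu)" for mu
    have lJ: "l mu > 0" if "mu \<in> J" for mu
    proof -
      have "l mu = (\<Sum>i<k. Re (x mu i * cnj (z i)))" unfolding l_def d_def by (rule ell) (use zK in auto)
      also have "\<dots> \<ge> (\<Sum>i<k. (cmod (z i))^2)" using w0(4) that unfolding z_def by auto
      finally show ?thesis using S by linarith
    qed
    define bnd where "bnd mu = (if mu \<in> J then 2 * l mu / ((cmod (d mu))^2 + 1)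
       else (c - cmod (rs mu)) / (cmod (d mu) + 1))" for mu
    have bpos: "bnd mu > 0" if "mu \<in> E" for mu
    proof (cases "mu \<in> J")
      case True
      have "(cmod (d mu))^2 + 1 > 0" by (simp add: add_nonneg_pos)
      thus ?thesis unfolding bnd_def using lJ[OF True] True by (simp add: divide_pos_pos)
    next
      case False
      hence "cmod (rs mu) < c" using rsc[OF that] that unfolding J_def by auto
      moreover have "cmod (d mu) + 1 > 0" by (simp add: add_nonneg_pos)
      ultimately show ?thesis using False unfolding bnd_def by (simp add: divide_pos_pos)
    qed
    define t where "t = Min (bnd ` E) / 2"
    have Minpos: "Min (bnd ` E) > 0" using bpos E by (subst Min_gr_iff) auto
    have t0: "t > 0" unfolding t_def using Minpos by simp
    have tb: "t < bnd mu" if "mu \<in> E" for mu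
    proof -
      have "Min (bnd ` E) \<le> bnd mu" using E that by (intro Min_le) auto
      thus ?thesis unfolding t_def using Minpos by linarith
    qed
    define alt where "alt i = astar i + complex_of_real t * z i" for i
    have altK: "\<forall>i<k. alt i \<in> K" unfolding alt_def using aK zK Kf_simps[OF K] by auto
    have rat: "r alt mu = rs mu - complex_of_real t * d mu" for mu
      unfolding r_def rs_def alt_def d_def by (simp add: algebra_simps sum.distrib sum_distrib_left)
    have less: "cmod (r alt mu) < c" if mu: "mu \<in> E" for mu
    proof (cases "mu \<in> J")
      case True
      have cm: "cmod (rs mu) = c" using True unfolding J_def by auto
      have "(cmod (rs mu + complex_of_real (- t) * d mu))^2
          = (cmod (rs mu))^2 + 2 * (- t) * Re (d mu * cnj (rs mu)) + (- t)^2 * (cmod (d mu))^2"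
        by (rule cmod_add_sq)
      also have "Re (d mu * cnj (rs mu)) = l mu" unfolding l_def by (simp add: mult.commute)
      finally have eq: "(cmod (r alt mu))^2 = c^2 - t * (2 * l mu - t * (cmod (d mu))^2)"
        unfolding rat cm by (simp add: algebra_simps power2_eq_square)
      have dp: "(cmod (d mu))^2 + 1 > 0" by (simp add: add_nonneg_pos)
      have "t * ((cmod (d mu))^2 + 1) < 2 * l mu"
        using tb[OF mu] True pos_less_divide_eq[OF dp] unfolding bnd_def by simp
      hence "t * (cmod (d mu))^2 < 2 * l mu" using t0 by (simp add: algebra_simps)
      hence "t * (2 * l mu - t * (cmod (d mu))^2) > 0" using t0 by (simp add: mult.assoc)
      hence "(cmod (r alt mu))^2 < c^2" using eq by linarith
      moreover have "c \<ge> 0" using cm by auto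
      ultimately show ?thesis by (simp add: power_less_imp_less_base)
    next
      case False
      have "cmod (r alt mu) \<le> cmod (rs mu) + t * cmod (d mu)"
        unfolding rat using norm_triangle_ineq4[of "rs mu" "complex_of_real t * d mu"] t0
        by (simp add: norm_mult)
      also have "t * cmod (d mu) \<le> t * (cmod (d mu) + 1)" using t0 by simp
      also have dp: "cmod (d mu) + 1 > 0" by (simp add: add_nonneg_pos)
      have "t * (cmod (d mu) + 1) < c - cmod (rs mu)"
        using tb[OF mu] False pos_less_divide_eq[OF dp] unfolding bnd_def by simp
      finally show ?thesis by simp
    qed
    have "Nmax E (r alt) < c" by (rule Nmax_less[OF E less])
    with opt[OF altK] show False unfolding c_def by simp
  qed
  have zz: "z i = 0" if "i < k" for i
  proof -
    have "\<forall>i\<in>{..<k}. (cmod (z i))^2 = 0" using z0 by (subst sum_nonneg_eq_0_iff[symmetric]) auto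
    thus ?thesis using that by auto
  qed
  have orth: "(\<Sum>mu\<in>J. w0 mu * Re (cnj (rs mu) * (\<Sum>i<k. b i * phi i mu))) = 0"
    if b: "\<forall>i<k. b i \<in> K" for b
  proof -
    have "(\<Sum>mu\<in>J. w0 mu * Re (cnj (rs mu) * (\<Sum>i<k. b i * phi i mu)))
        = (\<Sum>mu\<in>J. \<Sum>i<k. Re (complex_of_real (w0 mu) * x mu i * cnj (b i)))"
      unfolding ell[OF b] by (rule sum.cong[OF refl]) (simp only: sum_distrib_left Re_ofr mult.assoc)
    also have "\<dots> = (\<Sum>i<k. \<Sum>mu\<in>J. Re (complex_of_real (w0 mu) * x mu i * cnj (b i)))"
      by (rule sum.swap)
    also have "\<dots> = (\<Sum>i<k. Re (z i * cnj (b i)))"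
      unfolding z_def by (simp add: Re_sum sum_distrib_right)
    also have "\<dots> = 0" using zz by simp
    finally show ?thesis .
  qed
  have sE: "(\<Sum>mu\<in>E. g mu) = (\<Sum>mu\<in>J. g mu)" if "\<And>mu. mu \<notin> J \<Longrightarrow> g mu = 0" for g :: "complex \<Rightarrow> real"
    by (rule sum.mono_neutral_right) (use E J that in auto)
  have alg: "(\<Sum>mu\<in>J. w0 mu * (c^2 - 2 * R mu)) = c^2 * (\<Sum>mu\<in>J. w0 mu) - 2 * (\<Sum>mu\<in>J. w0 mu * R mu)"
    for R :: "complex \<Rightarrow> real"
    by (simp add: right_diff_distrib sum_subtractf sum_distrib_left sum_distrib_right mult_ac)
  show ?thesis
  proof (rule exI[of _ w0], intro conjI allI impI)
    fix mu show "w0 mu \<ge> 0" using w0(1) by simp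
  next
    show "(\<Sum>mu\<in>E. w0 mu) = 1" using sE[of w0] w0 by simp
  next
    fix a assume a: "\<forall>i<k. a i \<in> K"
    define b where "b i = a i - astar i" for i
    have bK: "\<forall>i<k. b i \<in> K" unfolding b_def using a aK Kf_simps[OF K] by auto
    have ra: "r a mu = rs mu - (\<Sum>i<k. b i * phi i mu)" for mu
      unfolding r_def rs_def b_def by (simp add: algebra_simps sum_subtractf)
    have "(\<Sum>mu\<in>E. w0 mu * (cmod (r a mu))^2) = (\<Sum>mu\<in>J. w0 mu * (cmod (r a mu))^2)"
      using sE[of "\<lambda>mu. w0 mu * (cmod (r a mu))^2"] w0 by simp
    also have "\<dots> \<ge> (\<Sum>mu\<in>J. w0 mu * (c^2 - 2 * Re (cnj (rs mu) * (\<Sum>i<k. b i * phi i mu))))"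
    proof (rule sum_mono)
      fix mu assume mu: "mu \<in> J"
      have "c^2 - 2 * Re (cnj (rs mu) * (\<Sum>i<k. b i * phi i mu)) \<le> (cmod (r a mu))^2"
        unfolding ra using cmod_diff_sq_ge[of "rs mu" "\<Sum>i<k. b i * phi i mu"] mu unfolding J_def by auto
      thus "w0 mu * (c^2 - 2 * Re (cnj (rs mu) * (\<Sum>i<k. b i * phi i mu))) \<le> w0 mu * (cmod (r a mu))^2"
        using w0(1) by (simp add: mult_left_mono)
    qed
    also have "(\<Sum>mu\<in>J. w0 mu * (c^2 - 2 * Re (cnj (rs mu) * (\<Sum>i<k. b i * phi i mu))))
        = c^2 * (\<Sum>mu\<in>J. w0 mu) - 2 * (\<Sum>mu\<in>J. w0 mu * Re (cnj (rs mu) * (\<Sum>i<k. b i * phi i mu)))"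
      by (rule alg)
    also have "\<dots> = c^2" using orth[OF bK] w0(3) by simp
    finally show "(\<Sum>mu\<in>E. w0 mu * (cmod (r a mu))^2) \<ge> (Nmax E (r astar))^2" unfolding c_def .
  qed
qed


lemma sum_cnj_reindex:
  assumes Ec: "\<And>mu. mu \<in> E \<Longrightarrow> cnj mu \<in> E"
  shows "(\<Sum>mu\<in>E. g (cnj mu)) = (\<Sum>mu\<in>E. (g mu :: real))"
proof -
  have inj: "inj_on cnj E" by (auto intro: inj_onI)
  have cE: "cnj ` E = E" using Ec by (force intro: image_eqI[of _ cnj "cnj _"])
  have "(\<Sum>mu\<in>E. g (cnj mu)) = (\<Sum>mu\<in>cnj ` E. g mu)"
    by (rule sum.reindex[OF inj, symmetric, unfolded comp_def])
  thus ?thesis unfolding cE .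
qed

lemma weights:
  fixes K E :: "complex set" and f :: "complex \<Rightarrow> complex" and phi :: "nat \<Rightarrow> complex \<Rightarrow> complex"
    and astar :: "nat \<Rightarrow> complex" and k :: nat
  assumes r_def: "r = (\<lambda>a x. f x - (\<Sum>i<k. a i * phi i x))"
    and K: "Kf K" and E: "finite E" "E \<noteq> {}"
    and aK: "\<forall>i<k. astar i \<in> K"
    and opt: "\<And>b. \<forall>i<k. b i \<in> K \<Longrightarrow> Nmax E (r astar) \<le> Nmax E (r b)"
    and RC: "K = \<real> \<Longrightarrow> (\<forall>mu\<in>E. cnj mu \<in> E) \<and> (\<forall>mu\<in>E. f (cnj mu) = cnj (f mu) \<and>
              (\<forall>i<k. phi i (cnj mu) = cnj (phi i mu)))"
  shows "\<exists>w. (\<forall>mu. w mu \<ge> 0) \<and> (\<Sum>mu\<in>E. w mu) = 1 \<and>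
     (\<forall>a. (\<forall>i<k. a i \<in> K) \<longrightarrow> (\<Sum>mu\<in>E. w mu * (cmod (r a mu))^2) \<ge> (Nmax E (r astar))^2) \<and>
     (K = \<real> \<longrightarrow> (\<forall>mu. w (cnj mu) = w mu))"
proof -
  obtain w0 where w0: "\<forall>mu. w0 mu \<ge> 0" "(\<Sum>mu\<in>E. w0 mu) = 1"
     "\<forall>a. (\<forall>i<k. a i \<in> K) \<longrightarrow> (\<Sum>mu\<in>E. w0 mu * (cmod (r a mu))^2) \<ge> (Nmax E (r astar))^2"
    using weights_base[OF r_def K E aK opt] by blast
  show ?thesis
  proof (cases "K = \<real>")
    case False thus ?thesis using w0 by blast
  next
    case True
    from RC[OF True] have Ec: "\<And>mu. mu \<in> E \<Longrightarrow> cnj mu \<in> E"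
      and fc: "\<And>mu. mu \<in> E \<Longrightarrow> f (cnj mu) = cnj (f mu)"
      and pc: "\<And>mu i. mu \<in> E \<Longrightarrow> i < k \<Longrightarrow> phi i (cnj mu) = cnj (phi i mu)" by auto
    define w where "w mu = (w0 mu + w0 (cnj mu)) / 2" for mu
    have rc: "r a (cnj mu) = cnj (r a mu)" if a: "\<forall>i<k. a i \<in> K" and mu: "mu \<in> E" for a mu
    proof -
      have "(\<Sum>i<k. a i * phi i (cnj mu)) = cnj (\<Sum>i<k. a i * phi i mu)"
        unfolding cnj_sum
      proof (rule sum.cong[OF refl])
        fix i assume "i \<in> {..<k}"
        hence i: "i < k" by simp
        have "cnj (a i) = a i" using a i True by (simp add: Reals_cnj_iff)
        thus "a i * phi i (cnj mu) = cnj (a i * phi i mu)" using pc[OF mu i] by simp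
      qed
      thus ?thesis unfolding r_def using fc[OF mu] by simp
    qed
    show ?thesis
    proof (intro exI[of _ w] conjI allI impI)
      fix mu show "w mu \<ge> 0" unfolding w_def using w0(1) by (simp add: add_nonneg_nonneg)
    next
      show "(\<Sum>mu\<in>E. w mu) = 1"
        unfolding w_def using sum_cnj_reindex[OF Ec, of w0] w0(2)
        by (simp add: sum_divide_distrib[symmetric] sum.distrib)
    next
      fix a assume a: "\<forall>i<k. a i \<in> K"
      have "(\<Sum>mu\<in>E. w0 (cnj mu) * (cmod (r a mu))^2) = (\<Sum>mu\<in>E. w0 (cnj (cnj mu)) * (cmod (r a (cnj mu)))^2)"
        by (rule sum_cnj_reindex[OF Ec, symmetric])
      also have "\<dots> = (\<Sum>mu\<in>E. w0 mu * (cmod (r a mu))^2)"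
        by (rule sum.cong[OF refl]) (simp add: rc[OF a])
      finally have eq: "(\<Sum>mu\<in>E. w0 (cnj mu) * (cmod (r a mu))^2) = (\<Sum>mu\<in>E. w0 mu * (cmod (r a mu))^2)" .
      have "(\<Sum>mu\<in>E. w mu * (cmod (r a mu))^2) =
          ((\<Sum>mu\<in>E. w0 mu * (cmod (r a mu))^2) + (\<Sum>mu\<in>E. w0 (cnj mu) * (cmod (r a mu))^2)) / 2"
        unfolding w_def by (simp add: sum.distrib sum_divide_distrib[symmetric] algebra_simps)
      also have "\<dots> = (\<Sum>mu\<in>E. w0 mu * (cmod (r a mu))^2)" unfolding eq by simp
      finally show "(\<Sum>mu\<in>E. w mu * (cmod (r a mu))^2) \<ge> (Nmax E (r astar))^2" using w0(3) a by simp
    next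
      fix mu show "w (cnj mu) = w mu" unfolding w_def by simp
    qed
  qed
qed


definition Nv :: "nat \<Rightarrow> complex mat \<Rightarrow> (nat \<Rightarrow> complex) \<Rightarrow> complex vec \<Rightarrow> (complex \<Rightarrow> complex) \<Rightarrow> real" where
  "Nv n Q lam v h = sqrt (\<Sum>j<n. (cmod (h (lam j)))^2 * (cmod (cq n Q v j))^2)"

lemma Nv_L2: "Nv n Q lam v h = L2_set (\<lambda>j. cmod (h (lam j)) * cmod (cq n Q v j)) {..<n}"
  unfolding Nv_def L2_set_def by (simp add: power_mult_distrib)

lemma Nv_snorm: "Kf K \<Longrightarrow> snorm_K K (Nv n Q lam v)"
proof
  assume "Kf K" thus "Kf K" .
next
  fix g h :: "complex \<Rightarrow> complex"
  have "Nv n Q lam v (\<lambda>x. g x + h x) \<le> L2_set (\<lambda>j. cmod (g (lam j)) * cmod (cq n Q v j) + cmod (h (lam j)) * cmod (cq n Q v j)) {..<n}"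
    unfolding Nv_L2 by (rule L2_set_mono) (auto simp: distrib_right[symmetric] intro!: mult_right_mono norm_triangle_ineq)
  also have "\<dots> \<le> Nv n Q lam v g + Nv n Q lam v h" unfolding Nv_L2 by (rule L2_set_triangle_ineq)
  finally show "Nv n Q lam v (\<lambda>x. g x + h x) \<le> Nv n Q lam v g + Nv n Q lam v h" .
next
  fix z :: complex and g
  show "Nv n Q lam v (\<lambda>x. z * g x) = cmod z * Nv n Q lam v g"
    unfolding Nv_L2 by (subst L2_set_right_distrib) (auto simp: norm_mult mult.assoc)
qed


theorem theorem1:
  fixes K :: "complex set" and n k :: nat and A :: "complex mat"
    and f :: "complex \<Rightarrow> complex" and phi :: "nat \<Rightarrow> complex \<Rightarrow> complex"
  assumes field: "K = \<real> \<or> K = UNIV" and npos: "n > 0"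
    and normal: "normal_mat n A"
    and entries: "\<forall>i<n. \<forall>j<n. A $$ (i,j) \<in> K"
    and real_case: "K = \<real> \<Longrightarrow> \<forall>lam. eigenvalue A lam \<longrightarrow>
        cnj (f lam) = f (cnj lam) \<and> (\<forall>i<k. cnj (phi i lam) = phi i (cnj lam))"
  shows "(\<forall>v \<in> {v \<in> Kvecs K n. vnorm v = 1}.
            \<exists>mu. is_min {vnorm ((matfun f A - pmat k alpha phi A) *\<^sub>v v) | alpha.
                           \<forall>i<k. alpha i \<in> K} mu)
       \<and> (\<exists>c. is_max {mu. \<exists>v \<in> {v \<in> Kvecs K n. vnorm v = 1}.
                          is_min {vnorm ((matfun f A - pmat k alpha phi A) *\<^sub>v v) | alpha.
                                  \<forall>i<k. alpha i \<in> K} mu} c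
             \<and> is_min {snorm K n (matfun f A - pmat k alpha phi A) | alpha.
                        \<forall>i<k. alpha i \<in> K} c)"
proof -
  have K: "Kf K" using field unfolding Kf_def .
  have A: "A \<in> carrier_mat n n" using normal unfolding normal_mat_def by auto
  obtain Q lam where Q: "unitary_mat n Q" and AQ: "A = SD n Q lam" using spectral[OF normal] by blast
  have Qc: "Q \<in> carrier_mat n n" using Q unitary_carrier by auto
  define E where "E = lam ` {..<n}"
  have E: "finite E" "E \<noteq> {}" unfolding E_def using npos by auto
  define r where "r = (\<lambda>(a::nat \<Rightarrow> complex) x. f x - (\<Sum>i<k. a i * phi i x))"
  have M: "matfun f A - pmat k a phi A = SD n Q (\<lambda>j. r a (lam j))" for a
    unfolding matfun_SD[OF Q AQ] pmat_SD[OF Q AQ] SD_minus[OF Qc] r_def by simp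
  define U where "U = {v \<in> Kvecs K n. vnorm v = 1}"
  have Uc: "v \<in> carrier_vec n" if "v \<in> U" for v
    using that unfolding U_def Kvecs_def by (auto intro: carrier_vecI)
  have vn: "vnorm ((matfun f A - pmat k a phi A) *\<^sub>v v) = Nv n Q lam v (r a)" if "v \<in> carrier_vec n" for v a
    unfolding M vnorm_SD[OF Q that] Nv_def ..
  have cq1: "(\<Sum>j<n. (cmod (cq n Q v j))^2) = 1" if "v \<in> U" for v
  proof -
    have "vnorm v = 1" using that unfolding U_def by auto
    hence "(\<Sum>a<n. (cmod (v $ a))^2) = 1" unfolding vnorm_carrier[OF Uc[OF that]] by simp
    thus ?thesis using cq_norm[OF Q Uc[OF that]] by simp
  qed
  have upper: "Nv n Q lam v h \<le> Nmax E h" if "v \<in> U" for v h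
  proof -
    obtain x0 where x0: "x0 \<in> E" using E(2) by auto
    have "cmod (h x0) \<le> Nmax E h" by (rule Nmax_ge[OF E(1) x0])
    hence N0: "Nmax E h \<ge> 0" using norm_ge_zero[of "h x0"] by linarith
    have "(\<Sum>j<n. (cmod (h (lam j)))^2 * (cmod (cq n Q v j))^2) \<le> (\<Sum>j<n. (Nmax E h)^2 * (cmod (cq n Q v j))^2)"
    proof (rule sum_mono)
      fix j assume "j \<in> {..<n}"
      hence "cmod (h (lam j)) \<le> Nmax E h" using Nmax_ge[OF E(1)] unfolding E_def by auto
      hence "(cmod (h (lam j)))^2 \<le> (Nmax E h)^2" by (simp add: power_mono)
      thus "(cmod (h (lam j)))^2 * (cmod (cq n Q v j))^2 \<le> (Nmax E h)^2 * (cmod (cq n Q v j))^2"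
        by (simp add: mult_right_mono)
    qed
    also have "\<dots> = (Nmax E h)^2" using cq1[OF that] by (simp add: sum_distrib_left[symmetric])
    finally have "(\<Sum>j<n. (cmod (h (lam j)))^2 * (cmod (cq n Q v j))^2) \<le> (Nmax E h)^2" .
    hence "sqrt (\<Sum>j<n. (cmod (h (lam j)))^2 * (cmod (cq n Q v j))^2) \<le> sqrt ((Nmax E h)^2)"
      by (rule real_sqrt_le_mono)
    thus ?thesis unfolding Nv_def using N0 by simp
  qed
  have part1: "\<forall>v \<in> U. \<exists>mu. is_min {vnorm ((matfun f A - pmat k alpha phi A) *\<^sub>v v) | alpha.
                           \<forall>i<k. alpha i \<in> K} mu"
  proof
    fix v assume v: "v \<in> U"
    interpret N: snorm_K K "Nv n Q lam v" by (rule Nv_snorm[OF K])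
    obtain a where a: "\<forall>i<k. a i \<in> K" "\<And>b. \<forall>i<k. b i \<in> K \<Longrightarrow> Nv n Q lam v (r a) \<le> Nv n Q lam v (r b)"
      using N.min_exists[of k f phi] unfolding r_def by auto
    show "\<exists>mu. is_min {vnorm ((matfun f A - pmat k alpha phi A) *\<^sub>v v) | alpha. \<forall>i<k. alpha i \<in> K} mu"
    proof (rule exI[of _ "Nv n Q lam v (r a)"], unfold is_min_def, intro conjI ballI)
      show "Nv n Q lam v (r a) \<in> {vnorm ((matfun f A - pmat k alpha phi A) *\<^sub>v v) | alpha. \<forall>i<k. alpha i \<in> K}"
        unfolding mem_Collect_eq by (rule exI[of _ a]) (use vn[OF Uc[OF v], of a] a(1) in auto)
      fix x assume "x \<in> {vnorm ((matfun f A - pmat k alpha phi A) *\<^sub>v v) | alpha. \<forall>i<k. alpha i \<in> K}"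
      then obtain b where b: "x = vnorm ((matfun f A - pmat k b phi A) *\<^sub>v v)" "\<forall>i<k. b i \<in> K" by blast
      show "Nv n Q lam v (r a) \<le> x" unfolding b(1) vn[OF Uc[OF v]] using a(2)[OF b(2)] .
    qed
  qed
  have Nmax0: "Nmax E h \<ge> 0" for h
  proof -
    obtain x0 where x0: "x0 \<in> E" using E(2) by auto
    have "cmod (h x0) \<le> Nmax E h" by (rule Nmax_ge[OF E(1) x0])
    thus ?thesis using norm_ge_zero[of "h x0"] by linarith
  qed
  interpret NM: snorm_K K "Nmax E" by (rule Nmax_snorm[OF E K])
  obtain astar where astar: "\<forall>i<k. astar i \<in> K" "\<And>b. \<forall>i<k. b i \<in> K \<Longrightarrow> Nmax E (r astar) \<le> Nmax E (r b)"
    using NM.min_exists[of k f phi] unfolding r_def by auto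
  define c where "c = Nmax E (r astar)"
  have c0: "c \<ge> 0" unfolding c_def by (rule Nmax0)
  have Eeig: "eigenvalue A mu" if "mu \<in> E" for mu using that E_eig[OF Q AQ] unfolding E_def by auto
  have RC: "(\<forall>mu\<in>E. cnj mu \<in> E) \<and> (\<forall>mu\<in>E. f (cnj mu) = cnj (f mu) \<and> (\<forall>i<k. phi i (cnj mu) = cnj (phi i mu)))"
    if KR: "K = \<real>"
  proof -
    have real: "\<forall>i<n. \<forall>j<n. A $$ (i,j) \<in> \<real>" using entries KR by simp
    show ?thesis
    proof (rule conjI; intro ballI)
      fix mu assume mu: "mu \<in> E"
      obtain j where "j < n" "lam j = cnj mu" using eig_in_E[OF Q AQ real_eig_cnj[OF A real Eeig[OF mu]]] by blast
      thus "cnj mu \<in> E" unfolding E_def by (metis image_eqI lessThan_iff)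
    next
      fix mu assume mu: "mu \<in> E"
      show "f (cnj mu) = cnj (f mu) \<and> (\<forall>i<k. phi i (cnj mu) = cnj (phi i mu))"
        using real_case[OF KR] Eeig[OF mu] by auto
    qed
  qed
  obtain w where w: "\<forall>mu. w mu \<ge> 0" "(\<Sum>mu\<in>E. w mu) = 1"
    "\<forall>a. (\<forall>i<k. a i \<in> K) \<longrightarrow> (\<Sum>mu\<in>E. w mu * (cmod (r a mu))^2) \<ge> c^2"
    "K = \<real> \<longrightarrow> (\<forall>mu. w (cnj mu) = w mu)"
    using weights[OF r_def K E astar(1) astar(2) RC] unfolding c_def by blast
  have Pmc: "Pm n Q lam (cnj mu) a b = cnj (Pm n Q lam mu a b)"
    if KR: "K = \<real>" and ab: "a < n" "b < n" for mu a b
  proof -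
    have real: "\<forall>i<n. \<forall>j<n. A $$ (i,j) \<in> \<real>" using entries KR by simp
    have AQ': "A = SD n (cmat n Q) (\<lambda>j. cnj (lam j))" by (rule real_conj_decomp[OF Q AQ real])
    have "Pm n Q lam (cnj mu) a b = SD n Q (\<lambda>j. of_bool (lam j = cnj mu)) $$ (a,b)" by (rule Pm_SD[OF Qc ab])
    also have "SD n Q (\<lambda>j. of_bool (lam j = cnj mu)) = matfun (\<lambda>x. of_bool (x = cnj mu)) A"
      using matfun_SD[OF Q AQ, of "\<lambda>x. of_bool (x = cnj mu)"] by simp
    also have "\<dots> = SD n (cmat n Q) (\<lambda>j. of_bool (cnj (lam j) = cnj mu))"
      using matfun_SD[OF cmat_unitary[OF Q] AQ', of "\<lambda>x. of_bool (x = cnj mu)"] by simp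
    also have "(\<lambda>j. of_bool (cnj (lam j) = cnj mu) :: complex) = (\<lambda>j. cnj (of_bool (lam j = mu)))" by auto
    also have "SD n (cmat n Q) (\<lambda>j. cnj (of_bool (lam j = mu) :: complex)) $$ (a,b)
        = cnj (SD n Q (\<lambda>j. of_bool (lam j = mu)) $$ (a,b))" by (rule cmat_SD_entry[OF Qc ab])
    also have "\<dots> = cnj (Pm n Q lam mu a b)" using Pm_SD[OF Qc ab] by simp
    finally show ?thesis .
  qed
  have Rh: "(\<forall>mu. w (cnj mu) = w mu) \<and> (\<forall>mu\<in>lam ` {..<n}. cnj mu \<in> lam ` {..<n}) \<and>
       (\<forall>mu a b. a < n \<longrightarrow> b < n \<longrightarrow> Pm n Q lam (cnj mu) a b = cnj (Pm n Q lam mu a b))" if KR: "K = \<real>"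
  proof (intro conjI)
    show "\<forall>mu. w (cnj mu) = w mu" using w(4) KR by blast
    show "\<forall>mu\<in>lam ` {..<n}. cnj mu \<in> lam ` {..<n}" using RC[OF KR] unfolding E_def by blast
    show "\<forall>mu a b. a < n \<longrightarrow> b < n \<longrightarrow> Pm n Q lam (cnj mu) a b = cnj (Pm n Q lam mu a b)"
      using Pmc[OF KR] by blast
  qed
  have "\<exists>v. v \<in> carrier_vec n \<and>
    (\<forall>h. (\<Sum>j<n. (cmod (h (lam j)))^2 * (cmod (cq n Q v j))^2) = (\<Sum>mu\<in>lam ` {..<n}. w mu * (cmod (h mu))^2))
    \<and> ((K = \<real>) \<longrightarrow> (\<forall>a<n. v $ a \<in> \<real>))"
    by (rule vstar_exists[OF Q w(1) w(2)[unfolded E_def], of "K = \<real>", OF Rh])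
  then obtain vs where vs: "vs \<in> carrier_vec n"
    "\<And>h. (\<Sum>j<n. (cmod (h (lam j)))^2 * (cmod (cq n Q vs j))^2) = (\<Sum>mu\<in>E. w mu * (cmod (h mu))^2)"
    "K = \<real> \<Longrightarrow> \<forall>a<n. vs $ a \<in> \<real>"
    unfolding E_def by blast
  have vsU: "vs \<in> U"
  proof -
    have "\<forall>i<n. vs $ i \<in> K"
    proof (cases "K = \<real>")
      case True thus ?thesis using vs(3) by simp
    next
      case False hence "K = UNIV" using field by simp
      thus ?thesis by simp
    qed
    hence "vs \<in> Kvecs K n" using vs(1) unfolding Kvecs_def by auto
    moreover have "vnorm vs = 1"
    proof -
      have "(\<Sum>a<n. (cmod (vs $ a))^2) = (\<Sum>j<n. (cmod ((\<lambda>_. 1::complex) (lam j)))^2 * (cmod (cq n Q vs j))^2)"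
        using cq_norm[OF Q vs(1)] by simp
      also have "\<dots> = (\<Sum>mu\<in>E. w mu * (cmod ((\<lambda>_. 1::complex) mu))^2)" by (rule vs(2))
      also have "\<dots> = 1" using w(2) by simp
      finally show ?thesis unfolding vnorm_carrier[OF vs(1)] by simp
    qed
    ultimately show ?thesis unfolding U_def by simp
  qed
  have key: "Nv n Q lam vs (r a) \<ge> c" if a: "\<forall>i<k. a i \<in> K" for a
  proof -
    have "c^2 \<le> (\<Sum>mu\<in>E. w mu * (cmod (r a mu))^2)" using w(3) a by blast
    also have "\<dots> = (\<Sum>j<n. (cmod (r a (lam j)))^2 * (cmod (cq n Q vs j))^2)" using vs(2) by simp
    finally have "sqrt (c^2) \<le> Nv n Q lam vs (r a)" unfolding Nv_def by (rule real_sqrt_le_mono)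
    thus ?thesis using c0 by simp
  qed
  have vs_eq: "Nv n Q lam vs (r astar) = c"
    using key[OF astar(1)] upper[OF vsU, of "r astar"] unfolding c_def by simp
  have bdd: "bdd_above ((\<lambda>v. vnorm ((matfun f A - pmat k a phi A) *\<^sub>v v)) ` U)" for a
  proof (rule bdd_aboveI[of _ "Nmax E (r a)"])
    fix y assume "y \<in> (\<lambda>v. vnorm ((matfun f A - pmat k a phi A) *\<^sub>v v)) ` U"
    then obtain v where v: "v \<in> U" and y: "y = vnorm ((matfun f A - pmat k a phi A) *\<^sub>v v)" by blast
    show "y \<le> Nmax E (r a)" unfolding y vn[OF Uc[OF v]] by (rule upper[OF v])
  qed
  have sn: "snorm K n (matfun f A - pmat k a phi A) = (SUP v\<in>U. vnorm ((matfun f A - pmat k a phi A) *\<^sub>v v))" for a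
    unfolding snorm_def U_def ..
  have sn_ge: "snorm K n (matfun f A - pmat k a phi A) \<ge> c" if a: "\<forall>i<k. a i \<in> K" for a
  proof -
    have "c \<le> vnorm ((matfun f A - pmat k a phi A) *\<^sub>v vs)" using key[OF a] vn[OF vs(1)] by simp
    also have "\<dots> \<le> snorm K n (matfun f A - pmat k a phi A)" unfolding sn by (rule cSUP_upper[OF vsU bdd])
    finally show ?thesis .
  qed
  have sn_star: "snorm K n (matfun f A - pmat k astar phi A) = c"
  proof (rule antisym)
    show "snorm K n (matfun f A - pmat k astar phi A) \<le> c" unfolding sn
    proof (rule cSUP_least)
      show "U \<noteq> {}" using vsU by blast
      fix v assume v: "v \<in> U"
      show "vnorm ((matfun f A - pmat k astar phi A) *\<^sub>v v) \<le> c"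
        unfolding vn[OF Uc[OF v]] c_def by (rule upper[OF v])
    qed
    show "c \<le> snorm K n (matfun f A - pmat k astar phi A)" by (rule sn_ge[OF astar(1)])
  qed
  have part2: "is_max {mu. \<exists>v \<in> U. is_min {vnorm ((matfun f A - pmat k alpha phi A) *\<^sub>v v) | alpha.
                                  \<forall>i<k. alpha i \<in> K} mu} c"
    unfolding is_max_def
  proof (intro conjI ballI)
    have "is_min {vnorm ((matfun f A - pmat k alpha phi A) *\<^sub>v vs) | alpha. \<forall>i<k. alpha i \<in> K} c"
      unfolding is_min_def
    proof (intro conjI ballI)
      show "c \<in> {vnorm ((matfun f A - pmat k alpha phi A) *\<^sub>v vs) | alpha. \<forall>i<k. alpha i \<in> K}"
        unfolding mem_Collect_eq by (rule exI[of _ astar]) (use vn[OF vs(1)] vs_eq astar(1) in auto)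
      fix x assume "x \<in> {vnorm ((matfun f A - pmat k alpha phi A) *\<^sub>v vs) | alpha. \<forall>i<k. alpha i \<in> K}"
      then obtain b where b: "x = vnorm ((matfun f A - pmat k b phi A) *\<^sub>v vs)" "\<forall>i<k. b i \<in> K" by blast
      show "c \<le> x" unfolding b(1) vn[OF vs(1)] using key[OF b(2)] .
    qed
    thus "c \<in> {mu. \<exists>v \<in> U. is_min {vnorm ((matfun f A - pmat k alpha phi A) *\<^sub>v v) | alpha.
                                  \<forall>i<k. alpha i \<in> K} mu}" using vsU by blast
  next
    fix mu assume "mu \<in> {mu. \<exists>v \<in> U. is_min {vnorm ((matfun f A - pmat k alpha phi A) *\<^sub>v v) | alpha.
                                  \<forall>i<k. alpha i \<in> K} mu}"
    then obtain v where v: "v \<in> U" and m: "is_min {vnorm ((matfun f A - pmat k alpha phi A) *\<^sub>v v) | alpha.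
                                  \<forall>i<k. alpha i \<in> K} mu" by blast
    have "vnorm ((matfun f A - pmat k astar phi A) *\<^sub>v v) \<in> {vnorm ((matfun f A - pmat k alpha phi A) *\<^sub>v v) | alpha.
                                  \<forall>i<k. alpha i \<in> K}" using astar(1) by blast
    hence "mu \<le> vnorm ((matfun f A - pmat k astar phi A) *\<^sub>v v)" using m unfolding is_min_def by blast
    also have "\<dots> = Nv n Q lam v (r astar)" by (rule vn[OF Uc[OF v]])
    also have "\<dots> \<le> c" unfolding c_def by (rule upper[OF v])
    finally show "mu \<le> c" .
  qed
  have part3: "is_min {snorm K n (matfun f A - pmat k alpha phi A) | alpha. \<forall>i<k. alpha i \<in> K} c"
    unfolding is_min_def
  proof (intro conjI ballI)
    show "c \<in> {snorm K n (matfun f A - pmat k alpha phi A) | alpha. \<forall>i<k. alpha i \<in> K}"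
      unfolding mem_Collect_eq by (rule exI[of _ astar]) (use sn_star astar(1) in auto)
    fix x assume "x \<in> {snorm K n (matfun f A - pmat k alpha phi A) | alpha. \<forall>i<k. alpha i \<in> K}"
    then obtain b where b: "x = snorm K n (matfun f A - pmat k b phi A)" "\<forall>i<k. b i \<in> K" by blast
    show "c \<le> x" unfolding b(1) by (rule sn_ge[OF b(2)])
  qed
  have P1: "\<forall>v \<in> {v \<in> Kvecs K n. vnorm v = 1}. \<exists>mu. is_min {vnorm ((matfun f A - pmat k alpha phi A) *\<^sub>v v) | alpha.
                           \<forall>i<k. alpha i \<in> K} mu" using part1 unfolding U_def .
  have P2: "is_max {mu. \<exists>v \<in> {v \<in> Kvecs K n. vnorm v = 1}. is_min {vnorm ((matfun f A - pmat k alpha phi A) *\<^sub>v v) | alpha.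
                                  \<forall>i<k. alpha i \<in> K} mu} c" using part2 unfolding U_def .
  have P23: "\<exists>c. is_max {mu. \<exists>v \<in> {v \<in> Kvecs K n. vnorm v = 1}. is_min {vnorm ((matfun f A - pmat k alpha phi A) *\<^sub>v v) | alpha.
                                  \<forall>i<k. alpha i \<in> K} mu} c
             \<and> is_min {snorm K n (matfun f A - pmat k alpha phi A) | alpha.
                        \<forall>i<k. alpha i \<in> K} c"
    by (rule exI[of _ c], rule conjI[OF P2 part3])
  show ?thesis by (rule conjI[OF P1 P23])
qed


end
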